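(* Let $g(n,k)$ be the number of $k$-faces of $I(\mathfrak{gl}_n,V\oplus\bigwedge^2)$ and $G_n(t)=\sum_{k=0}^n g(n,k)t^k$. Then for every $n\ge0$ and real $t>0$, writing $r=\sqrt{t(1+t)}$, \[ G_n(t)=\frac{(t+r)(1+t+r)^n-(t-r)(1+t-r)^n}{2r}. \]
   Context: Identify the diagonal Cartan subalgebra of $\mathfrak{gl}_n$ with $\mathbb{R}^n$ with coordinates $x_1,\dots,x_n$. Let $W=\{x_1\ge\cdots\ge x_n\}$ and $W^0=\{x_1>\cdots>x_n\}$. For $1\le i\le j\le n$ let $\lambda_{i,j}^\perp$ be the hyperplane $x_i+x_j=0$ (for $i=j$: $x_i=0$). The arrangement $I(\mathfrak{gl}_n,V\oplus\bigwedge^2)$ consists of these hyperplanes restricted to $W$. Its chambers are the closures of the connected components of $W^0\setminus\bigcup\lambda_{i,j}^\perp$; a face is a chamber or the intersection of a chamber with a supporting hyperplane; a $k$-face is a face whose linear span has dimension $k$. *)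

theory Defs
  imports "HOL-Analysis.Analysis" "HOL-Library.Function_Algebras"
begin

text \<open>Points of R^n are modelled as functions nat => real vanishing outside {0..<n};
  coordinate x_(i+1) of the paper is x i here. The ambient topology on nat => real is the
  product topology (Function_Topology), which on this closed subspace is the Euclidean one.\<close>

definition Rn :: "nat \<Rightarrow> (nat \<Rightarrow> real) set" where
  "Rn n = {x. \<forall>i\<ge>n. x i = 0}"

definition Wcl :: "nat \<Rightarrow> (nat \<Rightarrow> real) set" where
  "Wcl n = {x \<in> Rn n. \<forall>i j. i \<le> j \<longrightarrow> j < n \<longrightarrow> x j \<le> x i}"

definition Wopen :: "nat \<Rightarrow> (nat \<Rightarrow> real) set" where
  "Wopen n = {x \<in> Rn n. \<forall>i j. i < j \<longrightarrow> j < n \<longrightarrow> x j < x i}"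

definition lam_perp :: "nat \<Rightarrow> nat \<Rightarrow> nat \<Rightarrow> (nat \<Rightarrow> real) set" where
  "lam_perp n i j = {x \<in> Rn n. x i + x j = 0}"

definition regular_part :: "nat \<Rightarrow> (nat \<Rightarrow> real) set" where
  "regular_part n = Wopen n - (\<Union>{lam_perp n i j | i j. i \<le> j \<and> j < n})"

definition chambers :: "nat \<Rightarrow> (nat \<Rightarrow> real) set set" where
  "chambers n = {closure (connected_component_set (regular_part n) x) | x. x \<in> regular_part n}"

definition affine_hyperplane :: "nat \<Rightarrow> (nat \<Rightarrow> real) \<Rightarrow> real \<Rightarrow> (nat \<Rightarrow> real) set" where
  "affine_hyperplane n a b = {x \<in> Rn n. (\<Sum>i<n. a i * x i) = b}"

definition supporting_hyperplane :: "nat \<Rightarrow> (nat \<Rightarrow> real) set \<Rightarrow> (nat \<Rightarrow> real) set \<Rightarrow> bool" where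
  "supporting_hyperplane n C H \<longleftrightarrow>
     (\<exists>a b. a \<in> Rn n \<and> (\<exists>i<n. a i \<noteq> 0) \<and> H = affine_hyperplane n a b \<and>
        (\<forall>x\<in>C. (\<Sum>i<n. a i * x i) \<le> b) \<and> C \<inter> H \<noteq> {})"

definition faces :: "nat \<Rightarrow> (nat \<Rightarrow> real) set set" where
  "faces n = chambers n \<union>
     {C \<inter> H | C H. C \<in> chambers n \<and> supporting_hyperplane n C H}"

definition lin_dim :: "(nat \<Rightarrow> real) set \<Rightarrow> nat" where
  "lin_dim S = vector_space.dim (\<lambda>(c::real) (x::nat \<Rightarrow> real) i. c * x i) S"

definition g :: "nat \<Rightarrow> nat \<Rightarrow> nat" where
  "g n k = card {F \<in> faces n. lin_dim F = k}"

definition G :: "nat \<Rightarrow> real \<Rightarrow> real" where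
  "G n t = (\<Sum>k=0..n. real (g n k) * t ^ k)"

end

theory Submission
  imports Defs
begin

definition cT :: "(nat \<Rightarrow> bool) \<Rightarrow> nat \<Rightarrow> nat" where
  "cT w k = card {j. j < k \<and> w j}"
definition cF :: "(nat \<Rightarrow> bool) \<Rightarrow> nat \<Rightarrow> nat" where
  "cF w k = card {j. j < k \<and> \<not> w j}"

lemma cT_Suc: "cT w (Suc k) = cT w k + (if w k then 1 else 0)"
proof -
  have "{j. j < Suc k \<and> w j} = (if w k then insert k {j. j < k \<and> w j} else {j. j < k \<and> w j})"
    by (auto simp: less_Suc_eq)
  then show ?thesis by (simp add: cT_def)
qed

lemma cF_Suc: "cF w (Suc k) = cF w k + (if w k then 0 else 1)"
proof -
  have "{j. j < Suc k \<and> \<not> w j} = (if w k then {j. j < k \<and> \<not> w j} else insert k {j. j < k \<and> \<not> w j})"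
    by (auto simp: less_Suc_eq)
  then show ?thesis by (simp add: cF_def)
qed

lemma cT_0[simp]: "cT w 0 = 0" and cF_0[simp]: "cF w 0 = 0"
  by (auto simp: cT_def cF_def)

lemma cTF: "cT w k + cF w k = k"
  by (induct k) (auto simp: cT_Suc cF_Suc)

lemma cT_mono: "j \<le> k \<Longrightarrow> cT w j \<le> cT w k"
  unfolding cT_def by (rule card_mono) auto

lemma cF_mono: "j \<le> k \<Longrightarrow> cF w j \<le> cF w k"
  unfolding cF_def by (rule card_mono) auto

definition pt :: "(nat \<Rightarrow> bool) \<Rightarrow> nat \<Rightarrow> nat \<times> nat" where
  "pt w k = (cT w k, cF w k)"

definition rv :: "nat \<Rightarrow> nat \<times> nat \<Rightarrow> nat \<Rightarrow> real" where
  "rv n p i = (if i < fst p then 1 else if n - snd p \<le> i \<and> i < n then -1 else 0)"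

definition vi :: "nat \<Rightarrow> (nat \<Rightarrow> bool) \<Rightarrow> nat \<Rightarrow> nat" where
  "vi n w k = (if w (k - 1) then cT w k - 1 else n - cF w k)"

definition ep :: "(nat \<Rightarrow> bool) \<Rightarrow> nat \<Rightarrow> real" where
  "ep w k = (if w (k - 1) then 1 else -1)"

lemma rv_stepT: "a + b < n \<Longrightarrow> rv n (Suc a, b) i = rv n (a, b) i + (if i = a then 1 else 0)"
  by (auto simp: rv_def)

lemma rv_stepF: "a + b < n \<Longrightarrow> rv n (a, Suc b) i = rv n (a, b) i + (if i = n - Suc b then -1 else 0)"
  by (auto simp: rv_def)

lemma K1: "j \<le> n \<Longrightarrow> rv n (pt w j) i = (\<Sum>l\<in>{1..j}. if vi n w l = i then ep w l else 0)"
proof (induct j)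
  case 0
  then show ?case by (simp add: pt_def rv_def)
next
  case (Suc j)
  have lt: "cT w j + cF w j < n" using Suc.prems cTF[of w j] by simp
  have "{1..Suc j} = insert (Suc j) {1..j}" by auto
  then have s: "(\<Sum>l\<in>{1..Suc j}. if vi n w l = i then ep w l else 0) =
     (if vi n w (Suc j) = i then ep w (Suc j) else 0) + (\<Sum>l\<in>{1..j}. if vi n w l = i then ep w l else 0)"
    by simp
  show ?case
  proof (cases "w j")
    case True
    then show ?thesis using Suc lt s
      by (simp add: pt_def cT_Suc cF_Suc rv_stepT vi_def ep_def) 
  next
    case False
    then show ?thesis using Suc lt s
      by (simp add: pt_def cT_Suc cF_Suc rv_stepF vi_def ep_def)
  qed
qed



lemma cT_pos: "w (k - 1) \<Longrightarrow> 1 \<le> k \<Longrightarrow> cT w (k - 1) + 1 = cT w k"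
  using cT_Suc[of w "k - 1"] by simp

lemma cF_pos: "\<not> w (k - 1) \<Longrightarrow> 1 \<le> k \<Longrightarrow> cF w (k - 1) + 1 = cF w k"
  using cF_Suc[of w "k - 1"] by simp

lemma vi_lt: "1 \<le> k \<Longrightarrow> k \<le> n \<Longrightarrow> vi n w k < n"
  using cT_pos[of w k] cF_pos[of w k] cTF[of w k]
  by (auto simp: vi_def)

lemma vi_T_lt: "1 \<le> k \<Longrightarrow> k \<le> n \<Longrightarrow> w (k - 1) \<Longrightarrow> vi n w k < cT w n"
  using cT_pos[of w k] cT_mono[of k n w] by (auto simp: vi_def)

lemma vi_F_ge: "1 \<le> k \<Longrightarrow> k \<le> n \<Longrightarrow> \<not> w (k - 1) \<Longrightarrow> cT w n \<le> vi n w k"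
  using cF_mono[of k n w] cTF[of w n] by (auto simp: vi_def)

lemma vi_TT: "1 \<le> k \<Longrightarrow> k \<le> n \<Longrightarrow> 1 \<le> l \<Longrightarrow> l \<le> n \<Longrightarrow> w (k - 1) \<Longrightarrow> w (l - 1) \<Longrightarrow>
   vi n w k < vi n w l \<Longrightarrow> k < l"
proof (rule ccontr)
  assume a: "1 \<le> k" "k \<le> n" "1 \<le> l" "l \<le> n" "w (k - 1)" "w (l - 1)" "vi n w k < vi n w l" "\<not> k < l"
  then have "cT w l \<le> cT w k" using cT_mono[of l k w] by simp
  then show False using a cT_pos[of w k] cT_pos[of w l] by (simp add: vi_def)
qed

lemma vi_FF: "1 \<le> k \<Longrightarrow> k \<le> n \<Longrightarrow> 1 \<le> l \<Longrightarrow> l \<le> n \<Longrightarrow> \<not> w (k - 1) \<Longrightarrow> \<not> w (l - 1) \<Longrightarrow>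
   vi n w k < vi n w l \<Longrightarrow> l < k"
proof (rule ccontr)
  assume a: "1 \<le> k" "k \<le> n" "1 \<le> l" "l \<le> n" "\<not> w (k - 1)" "\<not> w (l - 1)" "vi n w k < vi n w l" "\<not> l < k"
  then have "cF w k \<le> cF w l" using cF_mono[of k l w] by simp
  moreover have "cF w l \<le> n" using cTF[of w l] a by simp
  ultimately show False using a cF_pos[of w k] cF_pos[of w l] by (simp add: vi_def)
qed

lemma vi_inj: "inj_on (vi n w) {1..n}"
proof (rule inj_onI)
  fix k l assume k: "k \<in> {1..n}" and l: "l \<in> {1..n}" and e: "vi n w k = vi n w l"
  show "k = l"
  proof (rule ccontr)
    assume ne: "k \<noteq> l"
    consider "w (k - 1)" "w (l - 1)" | "\<not> w (k - 1)" "\<not> w (l - 1)" | "w (k - 1)" "\<not> w (l - 1)" | "\<not> w (k - 1)" "w (l - 1)"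
      by blast
    then show False
    proof cases
      case 1
      have "cT w k \<noteq> cT w l"
      proof (cases "k < l")
        case True
        have "cT w k \<le> cT w (l - 1)" by (rule cT_mono) (use True in simp)
        then show ?thesis using cT_pos[of w l] 1 k l by auto
      next
        case False
        have "cT w l \<le> cT w (k - 1)" by (rule cT_mono) (use False ne in simp)
        then show ?thesis using cT_pos[of w k] 1 k l by auto
      qed
      then show ?thesis using e 1 k l cT_pos[of w k] cT_pos[of w l] by (simp add: vi_def)
    next
      case 2
      have "cF w k \<noteq> cF w l"
      proof (cases "k < l")
        case True
        have "cF w k \<le> cF w (l - 1)" by (rule cF_mono) (use True in simp)
        then show ?thesis using cF_pos[of w l] 2 k l by auto
      next
        case False
        have "cF w l \<le> cF w (k - 1)" by (rule cF_mono) (use False ne in simp)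
        then show ?thesis using cF_pos[of w k] 2 k l by auto
      qed
      moreover have "cF w k \<le> n" "cF w l \<le> n" using cTF[of w k] cTF[of w l] k l by auto
      ultimately show ?thesis using e 2 by (simp add: vi_def)
    next
      case 3
      then show ?thesis using vi_T_lt[of k n w] vi_F_ge[of l n w] k l e by simp
    next
      case 4
      then show ?thesis using vi_T_lt[of l n w] vi_F_ge[of k n w] k l e by simp
    qed
  qed
qed

lemma vi_img: "vi n w ` {1..n} = {..<n}"
proof -
  have "vi n w ` {1..n} \<subseteq> {..<n}" using vi_lt by auto
  moreover have "card (vi n w ` {1..n}) = card {..<n}"
    using card_image[OF vi_inj[of n w]] by simp
  ultimately show ?thesis by (simp add: card_subset_eq)
qed

lemma vi_surj: "i < n \<Longrightarrow> \<exists>j\<in>{1..n}. vi n w j = i"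
  using vi_img[of n w] by (metis imageE lessThan_iff)

lemma ep_sq: "ep w k * ep w k = 1"
  by (simp add: ep_def)

lemma K1': assumes j: "j \<in> {1..n}" and k: "k \<le> n"
  shows "rv n (pt w k) (vi n w j) = (if j \<le> k then ep w j else 0)"
proof -
  have "(\<Sum>l\<in>{1..k}. if vi n w l = vi n w j then ep w l else 0)
      = (\<Sum>l\<in>{1..k}. if l = j then ep w l else 0)"
  proof (rule sum.cong)
    fix l assume "l \<in> {1..k}"
    then have "l \<in> {1..n}" using k by auto
    then show "(if vi n w l = vi n w j then ep w l else 0) = (if l = j then ep w l else 0)"
      using inj_onD[OF vi_inj[of n w]] j by auto
  qed simp
  also have "\<dots> = (if j \<le> k then ep w j else 0)"
    using j by (simp add: sum.delta)
  finally show ?thesis using K1[OF k] by simp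
qed

lemma pt_le: "fst (pt w k) + snd (pt w k) = k"
  by (simp add: pt_def cTF)

lemma rv_out: "n \<le> i \<Longrightarrow> fst p \<le> n \<Longrightarrow> rv n p i = 0"
  by (simp add: rv_def)

lemma rv_pt_out: "n \<le> i \<Longrightarrow> k \<le> n \<Longrightarrow> rv n (pt w k) i = 0"
  using pt_le[of w k] by (intro rv_out) auto

lemma CL: assumes J: "J \<subseteq> {1..n}" and j: "j \<in> {1..n}"
  shows "(\<Sum>k\<in>J. u k * rv n (pt w k) (vi n w j)) = ep w j * (\<Sum>k\<in>{k\<in>J. j \<le> k}. u k)"
proof -
  have "(\<Sum>k\<in>J. u k * rv n (pt w k) (vi n w j)) = (\<Sum>k\<in>J. if j \<le> k then ep w j * u k else 0)"
    by (rule sum.cong) (use J j K1' in auto)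
  also have "\<dots> = (\<Sum>k\<in>{k\<in>J. j \<le> k}. ep w j * u k)"
    using J by (simp add: sum.inter_filter finite_subset)
  finally show ?thesis by (simp add: sum_distrib_left)
qed



definition sz :: "nat \<Rightarrow> (nat \<Rightarrow> bool) \<Rightarrow> (nat \<Rightarrow> real) \<Rightarrow> nat \<Rightarrow> real" where
  "sz n w z k = (if 1 \<le> k \<and> k \<le> n then ep w k * z (vi n w k) else 0)"

definition Kc :: "nat \<Rightarrow> (nat \<Rightarrow> bool) \<Rightarrow> (nat \<Rightarrow> real) set" where
  "Kc n w = {z \<in> Rn n. \<forall>k\<in>{1..n}. sz n w z (Suc k) \<le> sz n w z k}"

definition Oc :: "nat \<Rightarrow> (nat \<Rightarrow> bool) \<Rightarrow> (nat \<Rightarrow> real) set" where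
  "Oc n w = {z \<in> Rn n. \<forall>k\<in>{1..n}. sz n w z (Suc k) < sz n w z k}"

definition comb :: "nat \<Rightarrow> (nat \<Rightarrow> bool) \<Rightarrow> nat set \<Rightarrow> (nat \<Rightarrow> real) \<Rightarrow> nat \<Rightarrow> real" where
  "comb n w I c = (\<lambda>i. \<Sum>k\<in>I. c k * rv n (pt w k) i)"

definition coneI :: "nat \<Rightarrow> (nat \<Rightarrow> bool) \<Rightarrow> nat set \<Rightarrow> (nat \<Rightarrow> real) set" where
  "coneI n w I = {comb n w I c | c. \<forall>k. 0 \<le> c k}"

lemma tele: "j \<le> Suc n \<Longrightarrow> (\<Sum>k\<in>{j..n}. f k - f (Suc k)) = f j - (f (Suc n) :: real)"
proof (induct n)
  case 0
  then show ?case by (cases j) auto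
next
  case (Suc n)
  show ?case
  proof (cases "j = Suc (Suc n)")
    case True then show ?thesis by simp
  next
    case False
    then have "{j..Suc n} = insert (Suc n) {j..n}" using Suc.prems by auto
    then show ?thesis using Suc False by simp
  qed
qed

lemma sz_comb: assumes I: "I \<subseteq> {1..n}" and j: "1 \<le> j"
  shows "sz n w (comb n w I c) j = (\<Sum>k\<in>{k\<in>I. j \<le> k}. c k)"
proof (cases "j \<le> n")
  case True
  then have "sz n w (comb n w I c) j = ep w j * (ep w j * (\<Sum>k\<in>{k\<in>I. j \<le> k}. c k))"
    using CL[OF I, of j c w] j by (simp add: sz_def comb_def)
  then show ?thesis by (simp add: mult.assoc[symmetric] ep_sq)
next
  case False
  then have e: "{k\<in>I. j \<le> k} = {}" using I by auto
  show ?thesis unfolding e using False by (simp add: sz_def)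
qed

lemma comb_Rn: "I \<subseteq> {1..n} \<Longrightarrow> comb n w I c \<in> Rn n"
  unfolding Rn_def comb_def using rv_pt_out by (auto intro!: sum.neutral)

lemma tail_diff: "finite I \<Longrightarrow> (\<Sum>k\<in>{k\<in>I. j \<le> k}. c k) - (\<Sum>k\<in>{k\<in>I. Suc j \<le> k}. c k)
   = (if j \<in> I then c j else (0::real))"
proof -
  assume f: "finite I"
  show ?thesis
  proof (cases "j \<in> I")
    case True
    then have "{k\<in>I. j \<le> k} = insert j {k\<in>I. Suc j \<le> k}" by auto
    then show ?thesis using True f by simp
  next
    case False
    then have "{k\<in>I. j \<le> k} = {k\<in>I. Suc j \<le> k}" by (auto simp: le_eq_less_or_eq)
    then show ?thesis using False by simp
  qed
qed

lemma sz_diff_comb: assumes I: "I \<subseteq> {1..n}" and j: "1 \<le> j"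
  shows "sz n w (comb n w I c) j - sz n w (comb n w I c) (Suc j) = (if j \<in> I then c j else 0)"
  using sz_comb[OF I j] sz_comb[OF I, of "Suc j"] tail_diff[where I=I and j=j and c=c] I j finite_subset[OF I]
  by simp

lemma cone_K: "coneI n w {1..n} = Kc n w"
proof
  show "coneI n w {1..n} \<subseteq> Kc n w"
  proof
    fix z assume "z \<in> coneI n w {1..n}"
    then obtain c where c: "\<forall>k. 0 \<le> c k" and z: "z = comb n w {1..n} c"
      by (auto simp: coneI_def)
    have "\<forall>k\<in>{1..n}. sz n w z (Suc k) \<le> sz n w z k"
    proof
      fix k assume k: "k \<in> {1..n}"
      have "sz n w z k - sz n w z (Suc k) = c k"
        using sz_diff_comb[where I="{1..n}" and n=n and j=k and w=w and c=c] k z by simp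
      then show "sz n w z (Suc k) \<le> sz n w z k" using c by (metis diff_ge_0_iff_ge)
    qed
    then show "z \<in> Kc n w" unfolding Kc_def using z comb_Rn[of "{1..n}" n w c] by simp
  qed
next
  show "Kc n w \<subseteq> coneI n w {1..n}"
  proof
    fix z assume z: "z \<in> Kc n w"
    define c where "c k = (if k \<in> {1..n} then sz n w z k - sz n w z (Suc k) else 0)" for k
    have cpos: "\<forall>k. 0 \<le> c k" using z by (auto simp: c_def Kc_def)
    have "z = comb n w {1..n} c"
    proof
      fix i
      show "z i = comb n w {1..n} c i"
      proof (cases "i < n")
        case False
        then show ?thesis using z rv_pt_out[of n i _ w]
          by (auto simp: Kc_def Rn_def comb_def)
      next
        case True
        then obtain j where j: "j \<in> {1..n}" "vi n w j = i" using vi_surj by blast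
        have "comb n w {1..n} c i = ep w j * (\<Sum>k\<in>{k\<in>{1..n}. j \<le> k}. c k)"
          using CL[of "{1..n}" n j c w] j by (simp add: comb_def)
        also have "{k\<in>{1..n}. j \<le> k} = {j..n}" using j by auto
        also have "(\<Sum>k\<in>{j..n}. c k) = (\<Sum>k\<in>{j..n}. sz n w z k - sz n w z (Suc k))"
          using j by (intro sum.cong) (auto simp: c_def)
        also have "\<dots> = sz n w z j - sz n w z (Suc n)" using j by (intro tele) auto
        also have "sz n w z (Suc n) = 0" by (simp add: sz_def)
        finally show ?thesis using j by (simp add: sz_def mult.assoc[symmetric] ep_sq)
      qed
    qed
    then show "z \<in> coneI n w {1..n}" using cpos by (auto simp: coneI_def)
  qed
qed



lemma sz_lin: "sz n w (\<lambda>i. a * u i + b * v i) k = a * sz n w u k + b * sz n w v k"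
  by (simp add: sz_def algebra_simps)

lemma smono: assumes "\<forall>k\<in>{1..n}. s (Suc k) < (s k :: real)" "1 \<le> j" "j < j'" "j' \<le> Suc n"
  shows "s j' < s j"
  using assms(3,4)
proof (induct j')
  case 0 then show ?case by simp
next
  case (Suc j')
  show ?case
  proof (cases "j = j'")
    case True then show ?thesis using assms Suc.prems by auto
  next
    case False
    then have "s j' < s j" using Suc by simp
    moreover have "s (Suc j') < s j'" using assms Suc.prems False by auto
    ultimately show ?thesis by simp
  qed
qed

lemma Oc_reg: assumes z: "z \<in> Oc n w" shows "z \<in> regular_part n"
proof -
  define s where "s = sz n w z"
  have sm: "\<forall>k\<in>{1..n}. s (Suc k) < s k" using z by (simp add: Oc_def s_def)
  have sn: "s (Suc n) = 0" by (simp add: s_def sz_def)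
  have spos: "0 < s j" if "j \<in> {1..n}" for j
    using smono[OF sm, of j "Suc n"] that sn by auto
  have zv: "z (vi n w j) = ep w j * s j" if "j \<in> {1..n}" for j
    using that by (simp add: s_def sz_def mult.assoc[symmetric] ep_sq)
  have abs_z: "\<bar>z (vi n w j)\<bar> = s j" if "j \<in> {1..n}" for j
    using zv[OF that] spos[OF that] by (simp add: ep_def)
  have sinj: "j = j'" if "j \<in> {1..n}" "j' \<in> {1..n}" "s j = s j'" for j j'
    using smono[OF sm, of j j'] smono[OF sm, of j' j] that by (cases "j < j'"; cases "j' < j") auto
  have Rn: "z \<in> Rn n" using z by (simp add: Oc_def)
  have W: "z \<in> Wopen n" unfolding Wopen_def
  proof (intro CollectI conjI allI impI Rn)
    fix i i' assume ii: "i < i'" "i' < n"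
    obtain j where j: "j \<in> {1..n}" "vi n w j = i" using vi_surj[of i n w] ii by auto
    obtain j' where j': "j' \<in> {1..n}" "vi n w j' = i'" using vi_surj[of i' n w] ii by auto
    consider "w (j - 1)" "w (j' - 1)" | "\<not> w (j - 1)" "\<not> w (j' - 1)" | "w (j - 1)" "\<not> w (j' - 1)"
       | "\<not> w (j - 1)" "w (j' - 1)" by blast
    then show "z i' < z i"
    proof cases
      case 1
      then have "j < j'" using vi_TT[of j n j' w] j j' ii by auto
      then have "s j' < s j" using smono[OF sm, of j j'] j j' by auto
      then show ?thesis using zv[OF j(1)] zv[OF j'(1)] j j' 1 by (simp add: ep_def)
    next
      case 2
      then have "j' < j" using vi_FF[of j n j' w] j j' ii by auto
      then have "s j < s j'" using smono[OF sm, of j' j] j j' by auto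
      then show ?thesis using zv[OF j(1)] zv[OF j'(1)] j j' 2 by (simp add: ep_def)
    next
      case 3
      then show ?thesis using zv[OF j(1)] zv[OF j'(1)] spos[OF j(1)] spos[OF j'(1)] j j'
        by (simp add: ep_def)
    next
      case 4
      then show ?thesis using vi_F_ge[of j n w] vi_T_lt[of j' n w] j j' ii by auto
    qed
  qed
  have L: "z \<notin> lam_perp n i i'" if "i \<le> i'" "i' < n" for i i'
  proof
    assume "z \<in> lam_perp n i i'"
    then have e: "z i + z i' = 0" by (simp add: lam_perp_def)
    have il: "i < n" "i' < n" using that by auto
    obtain j where j: "j \<in> {1..n}" "vi n w j = i" using vi_surj[OF il(1), of w] by auto
    obtain j' where j': "j' \<in> {1..n}" "vi n w j' = i'" using vi_surj[OF il(2), of w] by auto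
    have "\<bar>z i\<bar> = \<bar>z i'\<bar>" using e by linarith
    then have "s j = s j'" using abs_z[OF j(1)] abs_z[OF j'(1)] j j' by simp
    then have "j = j'" using sinj j j' by simp
    then have "z i = 0" using e j j' by simp
    then show False using abs_z[OF j(1)] spos[OF j(1)] j by simp
  qed
  show ?thesis unfolding regular_part_def using W L by blast
qed

lemma reg_ne: assumes y: "y \<in> regular_part n" and k: "k \<in> {1..n}"
  shows "sz n w y (Suc k) \<noteq> sz n w y k"
proof
  assume e: "sz n w y (Suc k) = sz n w y k"
  have W: "y \<in> Wopen n" and L: "\<And>i j. i \<le> j \<Longrightarrow> j < n \<Longrightarrow> y \<notin> lam_perp n i j"
    using y by (auto simp: regular_part_def)
  have R: "y \<in> Rn n" using W by (simp add: Wopen_def)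
  show False
  proof (cases "k = n")
    case True
    then have "y (vi n w n) = 0" using e k by (simp add: sz_def ep_def split: if_splits)
    moreover have "vi n w n < n" using vi_lt[of n n w] k True by simp
    ultimately show False using L[of "vi n w n" "vi n w n"] R by (simp add: lam_perp_def)
  next
    case False
    then have k1: "Suc k \<in> {1..n}" using k by auto
    have ne: "vi n w k \<noteq> vi n w (Suc k)" using inj_onD[OF vi_inj[of n w] _ k k1] by auto
    have lt: "vi n w k < n" "vi n w (Suc k) < n" using vi_lt k k1 by auto
    have e2: "ep w (Suc k) * y (vi n w (Suc k)) = ep w k * y (vi n w k)"
      using e k k1 by (simp add: sz_def)
    show False
    proof (cases "ep w (Suc k) = ep w k")
      case True
      then have "y (vi n w (Suc k)) = y (vi n w k)" using e2 by (simp add: ep_def split: if_splits)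
      then show False using W ne lt unfolding Wopen_def
        by (metis (no_types, lifting) linorder_neqE_nat mem_Collect_eq order_less_irrefl)
    next
      case False
      then have "y (vi n w (Suc k)) + y (vi n w k) = 0" using e2 by (simp add: ep_def split: if_splits)
      then show False
      proof (cases "vi n w k \<le> vi n w (Suc k)")
        case True
        then show ?thesis using L[of "vi n w k" "vi n w (Suc k)"] lt R \<open>y (vi n w (Suc k)) + y (vi n w k) = 0\<close>
          by (auto simp: lam_perp_def add.commute)
      next
        case False
        then show ?thesis using L[of "vi n w (Suc k)" "vi n w k"] lt R \<open>y (vi n w (Suc k)) + y (vi n w k) = 0\<close>
          by (auto simp: lam_perp_def)
      qed
    qed
  qed
qed

lemma cont_sz: "continuous_on UNIV (\<lambda>y. sz n w y k)"
proof (cases "1 \<le> k \<and> k \<le> n")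
  case True
  then have eq: "(\<lambda>y. sz n w y k) = (\<lambda>y. ep w k * y (vi n w k))" by (simp add: sz_def)
  show ?thesis unfolding eq
    by (intro continuous_on_mult_left continuous_on_product_coordinates)
next
  case False
  then have eq: "(\<lambda>y. sz n w y k) = (\<lambda>y. 0)" by (auto simp: sz_def)
  show ?thesis unfolding eq by simp
qed

lemma Oc_seg: assumes "z1 \<in> Oc n w" "z2 \<in> Oc n w" "0 \<le> t" "t \<le> 1"
  shows "(\<lambda>i. (1 - t) * z1 i + t * z2 i) \<in> Oc n w"
proof -
  have R: "(\<lambda>i. (1 - t) * z1 i + t * z2 i) \<in> Rn n" using assms by (auto simp: Oc_def Rn_def)
  have "sz n w (\<lambda>i. (1 - t) * z1 i + t * z2 i) (Suc k) < sz n w (\<lambda>i. (1 - t) * z1 i + t * z2 i) k"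
    if k: "k \<in> {1..n}" for k
  proof -
    have a: "sz n w z1 (Suc k) < sz n w z1 k" "sz n w z2 (Suc k) < sz n w z2 k"
      using assms k by (auto simp: Oc_def)
    show ?thesis unfolding sz_lin
    proof (cases "t = 0")
      case True then show "(1 - t) * sz n w z1 (Suc k) + t * sz n w z2 (Suc k) < (1 - t) * sz n w z1 k + t * sz n w z2 k"
        using a by simp
    next
      case False
      then have "t * sz n w z2 (Suc k) < t * sz n w z2 k" using a assms by simp
      moreover have "(1 - t) * sz n w z1 (Suc k) \<le> (1 - t) * sz n w z1 k"
        using a assms by (intro mult_left_mono) auto
      ultimately show "(1 - t) * sz n w z1 (Suc k) + t * sz n w z2 (Suc k) < (1 - t) * sz n w z1 k + t * sz n w z2 k"
        by simp
    qed
  qed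
  then show ?thesis using R by (simp add: Oc_def)
qed

lemma comp_Oc: assumes x: "x \<in> Oc n w"
  shows "connected_component_set (regular_part n) x = Oc n w"
proof
  show "Oc n w \<subseteq> connected_component_set (regular_part n) x"
  proof
    fix z assume z: "z \<in> Oc n w"
    define g where "g t = (\<lambda>i. (1 - t) * x i + t * z i)" for t :: real
    have cg: "continuous_on {0..1} g" unfolding g_def
      by (intro continuous_on_coordinatewise_then_product continuous_intros)
    have "connected (g ` {0..1})" by (rule connected_continuous_image[OF cg]) simp
    moreover have "g ` {0..1} \<subseteq> regular_part n"
      using Oc_reg[OF Oc_seg[OF x z]] by (auto simp: g_def)
    moreover have "x \<in> g ` {0..1}" by (rule image_eqI[of _ _ 0]) (auto simp: g_def)
    moreover have "z \<in> g ` {0..1}" by (rule image_eqI[of _ _ 1]) (auto simp: g_def)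
    ultimately show "z \<in> connected_component_set (regular_part n) x"
      by (auto intro: connected_componentI)
  qed
next
  show "connected_component_set (regular_part n) x \<subseteq> Oc n w"
  proof
    fix z assume z: "z \<in> connected_component_set (regular_part n) x"
    define C where "C = connected_component_set (regular_part n) x"
    have Creg: "C \<subseteq> regular_part n" by (simp add: C_def connected_component_subset)
    have zR: "z \<in> Rn n" using z Creg by (auto simp: C_def regular_part_def Wopen_def)
    have "sz n w z (Suc k) < sz n w z k" if k: "k \<in> {1..n}" for k
    proof (rule ccontr)
      assume nl: "\<not> ?thesis"
      define f where "f y = sz n w y k - sz n w y (Suc k)" for y
      have cf: "continuous_on C f" unfolding f_def
        by (intro continuous_on_diff continuous_on_subset[OF cont_sz]) auto
      have conn: "connected (f ` C)" by (rule connected_continuous_image[OF cf]) (simp add: C_def)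
      have "f x \<in> f ` C" "f z \<in> f ` C" using Oc_reg[OF x] z by (auto simp: C_def)
      moreover have "f z \<le> 0" "0 < f x" using nl x k by (auto simp: f_def Oc_def)
      ultimately have "0 \<in> f ` C" using connected_contains_Icc[OF conn, of "f z" "f x"] by auto
      then obtain y where "y \<in> C" "f y = 0" by auto
      then show False using reg_ne[of y n k w] Creg k by (auto simp: f_def)
    qed
    then show "z \<in> Oc n w" using zR by (simp add: Oc_def)
  qed
qed

lemma Rn_closed: "closed (Rn n)"
proof -
  have "Rn n = (\<Inter>i\<in>{n..}. {x. x i = 0})" by (auto simp: Rn_def)
  then show ?thesis by (auto intro!: closed_INT closed_Collect_eq continuous_on_product_coordinates)
qed

lemma Kc_closed: "closed (Kc n w)"
proof -
  have "Kc n w = Rn n \<inter> (\<Inter>k\<in>{1..n}. {z. sz n w z (Suc k) \<le> sz n w z k})" by (auto simp: Kc_def)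
  then show ?thesis by (auto intro!: closed_Int Rn_closed closed_INT closed_Collect_le cont_sz)
qed

definition x0 :: "nat \<Rightarrow> (nat \<Rightarrow> bool) \<Rightarrow> nat \<Rightarrow> real" where
  "x0 n w = comb n w {1..n} (\<lambda>k. 1)"

lemma x0_Oc: "x0 n w \<in> Oc n w"
proof -
  have "sz n w (x0 n w) (Suc k) < sz n w (x0 n w) k" if "k \<in> {1..n}" for k
  proof -
    have "sz n w (x0 n w) k - sz n w (x0 n w) (Suc k) = 1"
      using sz_diff_comb[where I="{1..n}" and n=n and j=k and w=w and c="\<lambda>k. 1"] that
      by (simp add: x0_def)
    then show ?thesis by simp
  qed
  then show ?thesis using comb_Rn[of "{1..n}" n w] by (auto simp: Oc_def x0_def)
qed

lemma closure_Oc: "closure (Oc n w) = Kc n w"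
proof
  have "Oc n w \<subseteq> Kc n w" by (auto simp: Oc_def Kc_def less_imp_le)
  then show "closure (Oc n w) \<subseteq> Kc n w" by (rule closure_minimal) (rule Kc_closed)
next
  show "Kc n w \<subseteq> closure (Oc n w)"
  proof
    fix z assume z: "z \<in> Kc n w"
    define h where "h e = (\<lambda>i. 1 * z i + e * x0 n w i)" for e :: real
    define y where "y m = h (inverse (real (Suc m)))" for m
    have yO: "y m \<in> Oc n w" for m
    proof -
      have R: "y m \<in> Rn n" using z x0_Oc[of n w] by (auto simp: y_def h_def Kc_def Oc_def Rn_def)
      have "sz n w (y m) (Suc k) < sz n w (y m) k" if k: "k \<in> {1..n}" for k
        unfolding y_def h_def sz_lin
        using z x0_Oc[of n w] k by (auto simp: Kc_def Oc_def intro!: add_le_less_mono)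
      then show ?thesis using R by (simp add: Oc_def)
    qed
    have ch: "continuous_on UNIV h" unfolding h_def
      by (intro continuous_on_coordinatewise_then_product continuous_intros)
    have "(y \<longlongrightarrow> h 0) sequentially" unfolding y_def
      by (rule continuous_on_tendsto_compose[OF ch LIMSEQ_inverse_real_of_nat]) auto
    moreover have "h 0 = z" by (simp add: h_def)
    ultimately show "z \<in> closure (Oc n w)" using yO closure_sequential by metis
  qed
qed



lemma reg_word: assumes xr: "x \<in> regular_part n" shows "\<exists>w. x \<in> Oc n w"
proof -
  have W: "x \<in> Wopen n" and L: "\<And>i j. i \<le> j \<Longrightarrow> j < n \<Longrightarrow> x \<notin> lam_perp n i j"
    using xr by (auto simp: regular_part_def)
  have R: "x \<in> Rn n" using W by (simp add: Wopen_def)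
  have dec: "\<And>i j. i < j \<Longrightarrow> j < n \<Longrightarrow> x j < x i" using W by (simp add: Wopen_def)
  have nz: "x i \<noteq> 0" if "i < n" for i
    using L[of i i] that R by (auto simp: lam_perp_def)
  have dist: "i = l" if "i < n" "l < n" "\<bar>x i\<bar> = \<bar>x l\<bar>" for i l
  proof (rule ccontr)
    assume ne: "i \<noteq> l"
    have "x i \<noteq> x l" using dec[of i l] dec[of l i] ne that by (cases "i < l") auto
    then have s: "x i + x l = 0" using that(3) by (auto simp: abs_if split: if_splits)
    show False
    proof (cases "i < l")
      case True then show ?thesis using L[of i l] s R that by (auto simp: lam_perp_def)
    next
      case False then show ?thesis using L[of l i] s R that by (auto simp: lam_perp_def add.commute)
    qed
  qed
  define \<rho> where "\<rho> i = card {l. l < n \<and> \<bar>x i\<bar> \<le> \<bar>x l\<bar>}" for i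
  have \<rho>_lt: "\<rho> i < \<rho> l" if "i < n" "l < n" "\<bar>x l\<bar> < \<bar>x i\<bar>" for i l
    unfolding \<rho>_def
  proof (rule psubset_card_mono)
    show "finite {m. m < n \<and> \<bar>x l\<bar> \<le> \<bar>x m\<bar>}" by simp
    have s: "{m. m < n \<and> \<bar>x i\<bar> \<le> \<bar>x m\<bar>} \<subseteq> {m. m < n \<and> \<bar>x l\<bar> \<le> \<bar>x m\<bar>}"
    proof
      fix m assume "m \<in> {m. m < n \<and> \<bar>x i\<bar> \<le> \<bar>x m\<bar>}"
      then have "m < n" "\<bar>x i\<bar> \<le> \<bar>x m\<bar>" by simp_all
      then show "m \<in> {m. m < n \<and> \<bar>x l\<bar> \<le> \<bar>x m\<bar>}" using that(3) by simp
    qed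
    have "l \<in> {m. m < n \<and> \<bar>x l\<bar> \<le> \<bar>x m\<bar>}" "l \<notin> {m. m < n \<and> \<bar>x i\<bar> \<le> \<bar>x m\<bar>}"
      using that by simp_all
    then show "{m. m < n \<and> \<bar>x i\<bar> \<le> \<bar>x m\<bar>} \<subset> {m. m < n \<and> \<bar>x l\<bar> \<le> \<bar>x m\<bar>}"
      using s by blast
  qed
  have \<rho>_iff: "\<rho> i < \<rho> l \<longleftrightarrow> \<bar>x l\<bar> < \<bar>x i\<bar>" if "i < n" "l < n" for i l
  proof
    assume a: "\<rho> i < \<rho> l"
    show "\<bar>x l\<bar> < \<bar>x i\<bar>"
    proof (rule ccontr)
      assume "\<not> ?thesis"
      then have "\<bar>x i\<bar> < \<bar>x l\<bar> \<or> \<bar>x i\<bar> = \<bar>x l\<bar>" by auto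
      then show False using \<rho>_lt[of l i] dist[of i l] that a by auto
    qed
  qed (rule \<rho>_lt[OF that])
  have \<rho>_rng: "\<rho> i \<in> {1..n}" if "i < n" for i
  proof -
    have "i \<in> {l. l < n \<and> \<bar>x i\<bar> \<le> \<bar>x l\<bar>}" using that by simp
    moreover have fin: "finite {l. l < n \<and> \<bar>x i\<bar> \<le> \<bar>x l\<bar>}" by simp
    ultimately have "0 < card {l. l < n \<and> \<bar>x i\<bar> \<le> \<bar>x l\<bar>}"
      by (intro card_gt_0_iff[THEN iffD2]) blast
    then have "1 \<le> \<rho> i" unfolding \<rho>_def by simp
    moreover have "{l. l < n \<and> \<bar>x i\<bar> \<le> \<bar>x l\<bar>} \<subseteq> {..<n}" by blast
    then have "\<rho> i \<le> n" unfolding \<rho>_def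
      using card_mono[of "{..<n}" "{l. l < n \<and> \<bar>x i\<bar> \<le> \<bar>x l\<bar>}"] by simp
    ultimately show ?thesis by simp
  qed
  have \<rho>_inj: "inj_on \<rho> {..<n}"
  proof (rule inj_onI)
    fix i l assume "i \<in> {..<n}" "l \<in> {..<n}" "\<rho> i = \<rho> l"
    then have "\<not> \<bar>x l\<bar> < \<bar>x i\<bar>" "\<not> \<bar>x i\<bar> < \<bar>x l\<bar>" using \<rho>_iff[of i l] \<rho>_iff[of l i] by simp_all
    then have "\<bar>x i\<bar> = \<bar>x l\<bar>" by linarith
    then show "i = l" using dist[of i l] \<open>i \<in> {..<n}\<close> \<open>l \<in> {..<n}\<close> by simp
  qed
  have \<rho>_img: "\<rho> ` {..<n} = {1..n}"
  proof -
    have "\<rho> ` {..<n} \<subseteq> {1..n}" using \<rho>_rng by auto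
    moreover have "card (\<rho> ` {..<n}) = card {1..n}" using card_image[OF \<rho>_inj] by simp
    ultimately show ?thesis by (simp add: card_subset_eq)
  qed
  have \<rho>_surj: "\<exists>i<n. \<rho> i = k" if "k \<in> {1..n}" for k
    using \<rho>_img that by (metis imageE lessThan_iff)
  define w where "w j = (\<exists>i<n. \<rho> i = Suc j \<and> 0 < x i)" for j
  have key: "vi n w k = i0 \<and> ep w k * x i0 = \<bar>x i0\<bar>" if k: "k \<in> {1..n}" and i0: "i0 < n" "\<rho> i0 = k" for k i0
  proof -
    have wk: "w (k - 1) \<longleftrightarrow> 0 < x i0"
    proof
      assume "w (k - 1)"
      then obtain i where "i < n" "\<rho> i = k" "0 < x i" using k by (auto simp: w_def)
      then show "0 < x i0" using inj_onD[OF \<rho>_inj, of i i0] i0 by auto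
    next
      assume "0 < x i0" then show "w (k - 1)" using i0 k by (auto simp: w_def)
    qed
    show ?thesis
    proof (cases "0 < x i0")
      case True
      have "{j. j < k \<and> w j} = (\<lambda>i. \<rho> i - 1) ` {i. i < n \<and> \<rho> i \<le> k \<and> 0 < x i}"
      proof
        show "{j. j < k \<and> w j} \<subseteq> (\<lambda>i. \<rho> i - 1) ` {i. i < n \<and> \<rho> i \<le> k \<and> 0 < x i}"
        proof
          fix j assume "j \<in> {j. j < k \<and> w j}"
          then obtain i where "i < n" "\<rho> i = Suc j" "0 < x i" "j < k" by (auto simp: w_def)
          then show "j \<in> (\<lambda>i. \<rho> i - 1) ` {i. i < n \<and> \<rho> i \<le> k \<and> 0 < x i}"
            by (intro image_eqI[of _ _ i]) auto
        qed
      next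
        show "(\<lambda>i. \<rho> i - 1) ` {i. i < n \<and> \<rho> i \<le> k \<and> 0 < x i} \<subseteq> {j. j < k \<and> w j}"
        proof
          fix j assume "j \<in> (\<lambda>i. \<rho> i - 1) ` {i. i < n \<and> \<rho> i \<le> k \<and> 0 < x i}"
          then obtain i where i: "i < n" "\<rho> i \<le> k" "0 < x i" "j = \<rho> i - 1" by auto
          have "1 \<le> \<rho> i" using \<rho>_rng[OF i(1)] by simp
          then show "j \<in> {j. j < k \<and> w j}" using i unfolding w_def
            by (auto intro!: exI[of _ i])
        qed
      qed
      moreover have "inj_on (\<lambda>i. \<rho> i - 1) {i. i < n \<and> \<rho> i \<le> k \<and> 0 < x i}"
      proof (rule inj_onI)
        fix a b assume "a \<in> {i. i < n \<and> \<rho> i \<le> k \<and> 0 < x i}" "b \<in> {i. i < n \<and> \<rho> i \<le> k \<and> 0 < x i}"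
          "\<rho> a - 1 = \<rho> b - 1"
        then show "a = b" using \<rho>_rng[of a] \<rho>_rng[of b] inj_onD[OF \<rho>_inj, of a b] by auto
      qed
      moreover have "{i. i < n \<and> \<rho> i \<le> k \<and> 0 < x i} = {..i0}"
      proof
        show "{i. i < n \<and> \<rho> i \<le> k \<and> 0 < x i} \<subseteq> {..i0}"
        proof
          fix i assume i: "i \<in> {i. i < n \<and> \<rho> i \<le> k \<and> 0 < x i}"
          show "i \<in> {..i0}"
          proof (rule ccontr)
            assume "i \<notin> {..i0}"
            then have "x i < x i0" using dec[of i0 i] i by auto
            then have "\<rho> i0 < \<rho> i" using \<rho>_iff[of i0 i] i i0 True by auto
            then show False using i i0 by auto
          qed
        qed
      next
        show "{..i0} \<subseteq> {i. i < n \<and> \<rho> i \<le> k \<and> 0 < x i}"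
        proof
          fix i assume i: "i \<in> {..i0}"
          then have il: "i < n" using i0 by auto
          have "x i0 \<le> x i" using dec[of i i0] i i0 by (cases "i = i0") auto
          then have "\<not> \<rho> i0 < \<rho> i" using \<rho>_iff[of i0 i] il i0 True by auto
          then show "i \<in> {i. i < n \<and> \<rho> i \<le> k \<and> 0 < x i}" using il i0 True \<open>x i0 \<le> x i\<close> by auto
        qed
      qed
      ultimately have "cT w k = Suc i0" unfolding cT_def by (simp add: card_image)
      then show ?thesis using wk True by (simp add: vi_def ep_def)
    next
      case False
      then have neg: "x i0 < 0" using nz[OF i0(1)] by auto
      have "{j. j < k \<and> \<not> w j} = (\<lambda>i. \<rho> i - 1) ` {i. i < n \<and> \<rho> i \<le> k \<and> x i < 0}"
      proof
        show "{j. j < k \<and> \<not> w j} \<subseteq> (\<lambda>i. \<rho> i - 1) ` {i. i < n \<and> \<rho> i \<le> k \<and> x i < 0}"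
        proof
          fix j assume j: "j \<in> {j. j < k \<and> \<not> w j}"
          then have "Suc j \<in> {1..n}" using k by auto
          then obtain i where i: "i < n" "\<rho> i = Suc j" using \<rho>_surj by blast
          then have "\<not> 0 < x i" using j by (auto simp: w_def)
          then have "x i < 0" using nz[OF i(1)] by auto
          then show "j \<in> (\<lambda>i. \<rho> i - 1) ` {i. i < n \<and> \<rho> i \<le> k \<and> x i < 0}"
            using i j by (intro image_eqI[of _ _ i]) auto
        qed
      next
        show "(\<lambda>i. \<rho> i - 1) ` {i. i < n \<and> \<rho> i \<le> k \<and> x i < 0} \<subseteq> {j. j < k \<and> \<not> w j}"
        proof
          fix j assume "j \<in> (\<lambda>i. \<rho> i - 1) ` {i. i < n \<and> \<rho> i \<le> k \<and> x i < 0}"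
          then obtain i where i: "i < n" "\<rho> i \<le> k" "x i < 0" "j = \<rho> i - 1" by auto
          have "1 \<le> \<rho> i" using \<rho>_rng[OF i(1)] by simp
          moreover have "\<not> w j"
          proof
            assume "w j"
            then obtain i' where "i' < n" "\<rho> i' = Suc j" "0 < x i'" by (auto simp: w_def)
            then show False using i \<open>1 \<le> \<rho> i\<close> inj_onD[OF \<rho>_inj, of i i'] by auto
          qed
          ultimately show "j \<in> {j. j < k \<and> \<not> w j}" using i by auto
        qed
      qed
      moreover have "inj_on (\<lambda>i. \<rho> i - 1) {i. i < n \<and> \<rho> i \<le> k \<and> x i < 0}"
      proof (rule inj_onI)
        fix a b assume "a \<in> {i. i < n \<and> \<rho> i \<le> k \<and> x i < 0}" "b \<in> {i. i < n \<and> \<rho> i \<le> k \<and> x i < 0}"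
          "\<rho> a - 1 = \<rho> b - 1"
        then show "a = b" using \<rho>_rng[of a] \<rho>_rng[of b] inj_onD[OF \<rho>_inj, of a b] by auto
      qed
      moreover have "{i. i < n \<and> \<rho> i \<le> k \<and> x i < 0} = {i0..<n}"
      proof
        show "{i. i < n \<and> \<rho> i \<le> k \<and> x i < 0} \<subseteq> {i0..<n}"
        proof
          fix i assume i: "i \<in> {i. i < n \<and> \<rho> i \<le> k \<and> x i < 0}"
          show "i \<in> {i0..<n}"
          proof (rule ccontr)
            assume "i \<notin> {i0..<n}"
            then have "x i0 < x i" using dec[of i i0] i i0 by auto
            then have "\<rho> i0 < \<rho> i" using \<rho>_iff[of i0 i] i i0 neg by auto
            then show False using i i0 by auto
          qed
        qed
      next
        show "{i0..<n} \<subseteq> {i. i < n \<and> \<rho> i \<le> k \<and> x i < 0}"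
        proof
          fix i assume i: "i \<in> {i0..<n}"
          then have il: "i < n" by auto
          have "x i \<le> x i0" using dec[of i0 i] i by (cases "i = i0") auto
          then have "\<not> \<rho> i0 < \<rho> i" using \<rho>_iff[of i0 i] il i0 neg by auto
          then show "i \<in> {i. i < n \<and> \<rho> i \<le> k \<and> x i < 0}" using il i0 neg \<open>x i \<le> x i0\<close> by auto
        qed
      qed
      ultimately have "cF w k = n - i0" unfolding cF_def by (simp add: card_image)
      then show ?thesis using wk neg i0 by (simp add: vi_def ep_def)
    qed
  qed
  have szk: "sz n w x k = \<bar>x i0\<bar>" if k: "k \<in> {1..n}" and i0: "i0 < n" "\<rho> i0 = k" for k i0
    using key[OF that] k by (simp add: sz_def)
  have "\<forall>k\<in>{1..n}. sz n w x (Suc k) < sz n w x k"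
  proof
    fix k assume k: "k \<in> {1..n}"
    obtain i0 where i0: "i0 < n" "\<rho> i0 = k" using \<rho>_surj[OF k] by blast
    show "sz n w x (Suc k) < sz n w x k"
    proof (cases "k = n")
      case True
      then show ?thesis using szk[OF k i0] nz[OF i0(1)] by (simp add: sz_def)
    next
      case False
      then have k1: "Suc k \<in> {1..n}" using k by auto
      obtain i1 where i1: "i1 < n" "\<rho> i1 = Suc k" using \<rho>_surj[OF k1] by blast
      have "\<bar>x i1\<bar> < \<bar>x i0\<bar>" using \<rho>_iff[of i0 i1] i0 i1 by auto
      then show ?thesis using szk[OF k i0] szk[OF k1 i1] by simp
    qed
  qed
  then show ?thesis using R by (auto simp: Oc_def)
qed

lemma chambers_eq: "chambers n = {Kc n w | w. True}"
proof
  show "chambers n \<subseteq> {Kc n w | w. True}"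
  proof
    fix C assume "C \<in> chambers n"
    then obtain x where x: "x \<in> regular_part n" "C = closure (connected_component_set (regular_part n) x)"
      by (auto simp: chambers_def)
    obtain w where "x \<in> Oc n w" using reg_word[OF x(1)] by blast
    then have "C = Kc n w" using x comp_Oc closure_Oc by simp
    then show "C \<in> {Kc n w | w. True}" by blast
  qed
next
  show "{Kc n w | w. True} \<subseteq> chambers n"
  proof
    fix C assume "C \<in> {Kc n w | w. True}"
    then obtain w where C: "C = Kc n w" by blast
    have "C = closure (connected_component_set (regular_part n) (x0 n w))"
      using C comp_Oc[OF x0_Oc] closure_Oc by simp
    then show "C \<in> chambers n" using Oc_reg[OF x0_Oc] by (auto simp: chambers_def)
  qed
qed



definition phi :: "nat \<Rightarrow> (nat \<Rightarrow> real) \<Rightarrow> (nat \<Rightarrow> real) \<Rightarrow> real" where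
  "phi n a z = (\<Sum>i<n. a i * z i)"

lemma phi_comb: "finite I \<Longrightarrow> phi n a (comb n w I c) = (\<Sum>k\<in>I. c k * phi n a (rv n (pt w k)))"
proof -
  assume "finite I"
  have "phi n a (comb n w I c) = (\<Sum>i<n. \<Sum>k\<in>I. a i * (c k * rv n (pt w k) i))"
    by (simp add: phi_def comb_def sum_distrib_left)
  also have "\<dots> = (\<Sum>k\<in>I. \<Sum>i<n. a i * (c k * rv n (pt w k) i))" by (rule sum.swap)
  also have "\<dots> = (\<Sum>k\<in>I. c k * phi n a (rv n (pt w k)))"
    by (simp add: phi_def sum_distrib_left algebra_simps)
  finally show ?thesis .
qed

lemma comb_zero: "comb n w I (\<lambda>k. 0) = (\<lambda>i. 0)"
  by (simp add: comb_def)

lemma comb_scale: "comb n w I (\<lambda>k. t * c k) = (\<lambda>i. t * comb n w I c i)"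
  by (simp add: comb_def sum_distrib_left mult.assoc)

lemma comb_delta: assumes "k \<in> I" "finite I"
  shows "comb n w I (\<lambda>l. if l = k then 1 else 0) = rv n (pt w k)"
proof
  fix i
  have "(\<Sum>l\<in>I. (if l = k then 1 else 0) * rv n (pt w l) i) = (\<Sum>l\<in>I. if l = k then rv n (pt w k) i else 0)"
    by (rule sum.cong) auto
  also have "\<dots> = rv n (pt w k) i" using assms by (simp add: sum.delta')
  finally show "comb n w I (\<lambda>l. if l = k then 1 else 0) i = rv n (pt w k) i" by (simp add: comb_def)
qed

lemma comb_restrict: assumes "J \<subseteq> I" "finite I" "\<forall>k\<in>I - J. c k = 0"
  shows "comb n w I c = comb n w J c"
  unfolding comb_def using assms by (intro ext sum.mono_neutral_right) auto

lemma comb_extend: assumes "J \<subseteq> I" "finite I"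
  shows "comb n w J c = comb n w I (\<lambda>k. if k \<in> J then c k else 0)"
proof -
  have "comb n w I (\<lambda>k. if k \<in> J then c k else 0) = comb n w J (\<lambda>k. if k \<in> J then c k else 0)"
    using assms by (intro comb_restrict) auto
  also have "\<dots> = comb n w J c" unfolding comb_def by (intro ext sum.cong) auto
  finally show ?thesis by simp
qed

lemma coneI_mono: assumes "J \<subseteq> I" "finite I" shows "coneI n w J \<subseteq> coneI n w I"
proof
  fix z assume "z \<in> coneI n w J"
  then obtain c where c: "\<forall>k. 0 \<le> c k" "z = comb n w J c" by (auto simp: coneI_def)
  then have "z = comb n w I (\<lambda>k. if k \<in> J then c k else 0)" using comb_extend[OF assms] by simp
  moreover have "\<forall>k. 0 \<le> (if k \<in> J then c k else 0)" using c by simp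
  ultimately show "z \<in> coneI n w I" unfolding coneI_def by blast
qed

lemma face_eq: assumes neg: "\<forall>k\<in>{1..n}. phi n a (rv n (pt w k)) \<le> 0"
  shows "Kc n w \<inter> {x \<in> Rn n. phi n a x = 0} = coneI n w {k\<in>{1..n}. phi n a (rv n (pt w k)) = 0}"
    (is "_ = coneI n w ?I")
proof
  show "Kc n w \<inter> {x \<in> Rn n. phi n a x = 0} \<subseteq> coneI n w ?I"
  proof
    fix z assume z: "z \<in> Kc n w \<inter> {x \<in> Rn n. phi n a x = 0}"
    then obtain c where c: "\<forall>k. 0 \<le> c k" and zc: "z = comb n w {1..n} c"
      using cone_K[of n w] by (auto simp: coneI_def)
    have "(\<Sum>k\<in>{1..n}. c k * phi n a (rv n (pt w k))) = 0" using z zc phi_comb[of "{1..n}" n a w c] by simp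
    then have "(\<Sum>k\<in>{1..n}. - (c k * phi n a (rv n (pt w k)))) = 0" by (simp add: sum_negf)
    then have "\<forall>k\<in>{1..n}. - (c k * phi n a (rv n (pt w k))) = 0"
      using sum_nonneg_eq_0_iff[of "{1..n}" "\<lambda>k. - (c k * phi n a (rv n (pt w k)))"] neg c
      by (simp add: mult_nonneg_nonpos)
    then have "\<forall>k\<in>{1..n} - ?I. c k = 0" by auto
    then have "comb n w {1..n} c = comb n w ?I c" by (intro comb_restrict) auto
    then have "z = comb n w ?I c" using zc by simp
    then show "z \<in> coneI n w ?I" using c by (auto simp: coneI_def)
  qed
next
  show "coneI n w ?I \<subseteq> Kc n w \<inter> {x \<in> Rn n. phi n a x = 0}"
  proof
    fix z assume "z \<in> coneI n w ?I"
    then obtain c where c: "\<forall>k. 0 \<le> c k" and zc: "z = comb n w ?I c" by (auto simp: coneI_def)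
    have sub: "?I \<subseteq> {1..n}" by auto
    have "z \<in> coneI n w {1..n}" using coneI_mono[OF sub, of n w] \<open>z \<in> coneI n w ?I\<close> by auto
    then have K: "z \<in> Kc n w" using cone_K by simp
    have "phi n a z = 0" using zc phi_comb[of ?I n a w c] by simp
    moreover have "z \<in> Rn n" using zc comb_Rn[OF sub, of w c] by simp
    ultimately show "z \<in> Kc n w \<inter> {x \<in> Rn n. phi n a x = 0}" using K by simp
  qed
qed

lemma in_K: "\<forall>k. 0 \<le> c k \<Longrightarrow> comb n w {1..n} c \<in> Kc n w"
  using cone_K[of n w] unfolding coneI_def by blast

lemma rk_in_K: assumes "k \<in> {1..n}" shows "rv n (pt w k) \<in> Kc n w"
proof -
  have "comb n w {1..n} (\<lambda>l. if l = k then 1 else 0) \<in> Kc n w" by (rule in_K) simp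
  then show ?thesis using comb_delta[of k "{1..n}" n w] assms by simp
qed

lemma zero_in_K: "(\<lambda>i. 0) \<in> Kc n w"
proof -
  have "comb n w {1..n} (\<lambda>l. 0) \<in> Kc n w" by (rule in_K) simp
  then show ?thesis by (simp add: comb_zero)
qed

lemma face_fwd: assumes S: "supporting_hyperplane n (Kc n w) H"
  shows "\<exists>I. I \<subseteq> {1..n} \<and> Kc n w \<inter> H = coneI n w I"
proof -
  obtain a b where a: "a \<in> Rn n" and H: "H = affine_hyperplane n a b"
    and le: "\<forall>x\<in>Kc n w. phi n a x \<le> b" and ne: "Kc n w \<inter> H \<noteq> {}"
    using S unfolding supporting_hyperplane_def phi_def by blast
  have Hd: "H = {x \<in> Rn n. phi n a x = b}" using H by (simp add: affine_hyperplane_def phi_def)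
  have "phi n a (\<lambda>i. 0) \<le> b" using le zero_in_K[of n w] by blast
  then have "0 \<le> b" by (simp add: phi_def)
  obtain y where y: "y \<in> Kc n w" "phi n a y = b" using ne Hd by auto
  obtain c where c: "\<forall>k. 0 \<le> c k" and yc: "y = comb n w {1..n} c"
    using y cone_K[of n w] by (auto simp: coneI_def)
  have "comb n w {1..n} (\<lambda>k. 2 * c k) \<in> Kc n w" by (rule in_K) (use c in simp)
  then have "(\<lambda>i. 2 * y i) \<in> Kc n w" using comb_scale[of n w "{1..n}" 2 c] yc by simp
  then have "phi n a (\<lambda>i. 2 * y i) \<le> b" using le by blast
  moreover have "phi n a (\<lambda>i. 2 * y i) = 2 * phi n a y" by (simp add: phi_def sum_distrib_left algebra_simps)
  then have "phi n a (\<lambda>i. 2 * y i) = 2 * b" using y by simp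
  ultimately have b0: "b = 0" using \<open>0 \<le> b\<close> by simp
  have neg: "\<forall>k\<in>{1..n}. phi n a (rv n (pt w k)) \<le> 0"
  proof
    fix k assume "k \<in> {1..n}"
    then have "rv n (pt w k) \<in> Kc n w" by (rule rk_in_K)
    then show "phi n a (rv n (pt w k)) \<le> 0" using le b0 by blast
  qed
  have "Kc n w \<inter> H = coneI n w {k\<in>{1..n}. phi n a (rv n (pt w k)) = 0}"
    using face_eq[OF neg] Hd b0 by simp
  moreover have "{k\<in>{1..n}. phi n a (rv n (pt w k)) = 0} \<subseteq> {1..n}" by auto
  ultimately show ?thesis by blast
qed

lemma tele2: "(\<Sum>l\<in>{1..(j::nat)}. f l - f (l - 1)) = f j - (f 0 :: real)"
proof (induct j)
  case 0 then show ?case by simp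
next
  case (Suc j)
  have "{1..Suc j} = insert (Suc j) {1..j}" by auto
  then show ?case using Suc by simp
qed

lemma face_bwd: assumes I: "I \<subseteq> {1..n}" and nI: "I \<noteq> {1..n}"
  shows "\<exists>H. supporting_hyperplane n (Kc n w) H \<and> Kc n w \<inter> H = coneI n w I"
proof -
  define yy where "yy k = (if k \<in> I \<or> k = 0 then 0 else (-1::real))" for k
  define \<kappa> where "\<kappa> = the_inv_into {1..n} (vi n w)"
  define a where "a i = (if i < n then ep w (\<kappa> i) * (yy (\<kappa> i) - yy (\<kappa> i - 1)) else 0)" for i
  have bij: "bij_betw (vi n w) {1..n} {..<n}" using vi_inj vi_img by (simp add: bij_betw_def)
  have ka: "\<kappa> (vi n w l) = l" if "l \<in> {1..n}" for l
    using the_inv_into_f_f[OF vi_inj that] by (simp add: \<kappa>_def)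
  have phir: "phi n a (rv n (pt w j)) = yy j" if j: "j \<in> {1..n}" for j
  proof -
    have "phi n a (rv n (pt w j)) = (\<Sum>l\<in>{1..n}. a (vi n w l) * rv n (pt w j) (vi n w l))"
      unfolding phi_def using sum.reindex_bij_betw[OF bij, of "\<lambda>i. a i * rv n (pt w j) i"] by simp
    also have "\<dots> = (\<Sum>l\<in>{1..n}. if l \<le> j then yy l - yy (l - 1) else 0)"
    proof (rule sum.cong)
      fix l assume l: "l \<in> {1..n}"
      show "a (vi n w l) * rv n (pt w j) (vi n w l) = (if l \<le> j then yy l - yy (l - 1) else 0)"
        using K1'[OF l, of j w] j l vi_lt[of l n w] ka[OF l]
        by (auto simp: a_def ep_def)
    qed simp
    also have "\<dots> = (\<Sum>l\<in>{1..j}. yy l - yy (l - 1))"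
    proof -
      have "(\<Sum>l\<in>{1..n}. if l \<le> j then yy l - yy (l - 1) else 0) = (\<Sum>l\<in>{l\<in>{1..n}. l \<le> j}. yy l - yy (l - 1))"
        by (rule sum.inter_filter[symmetric]) simp
      moreover have "{l\<in>{1..n}. l \<le> j} = {1..j}" using j by auto
      ultimately show ?thesis by simp
    qed
    also have "\<dots> = yy j - yy 0" by (rule tele2)
    also have "\<dots> = yy j" by (simp add: yy_def)
    finally show ?thesis .
  qed
  have neg: "\<forall>k\<in>{1..n}. phi n a (rv n (pt w k)) \<le> 0" using phir by (simp add: yy_def)
  have Ieq: "{k\<in>{1..n}. phi n a (rv n (pt w k)) = 0} = I" using phir I by (auto simp: yy_def split: if_splits)
  define H where "H = affine_hyperplane n a 0"
  have Hd: "H = {x \<in> Rn n. phi n a x = 0}" by (simp add: H_def affine_hyperplane_def phi_def)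
  have "\<exists>k. k \<in> {1..n} \<and> k \<notin> I" using I nI by blast
  then obtain k where k: "k \<in> {1..n}" "k \<notin> I" by blast
  have "phi n a (rv n (pt w k)) = -1" using phir[OF k(1)] k by (simp add: yy_def)
  then have "\<exists>i<n. a i \<noteq> 0" unfolding phi_def by (metis (no_types, lifting) lessThan_iff mult_zero_left sum.neutral zero_neq_neg_one)
  moreover have "a \<in> Rn n" by (simp add: a_def Rn_def)
  moreover have "\<forall>x\<in>Kc n w. (\<Sum>i<n. a i * x i) \<le> 0"
  proof
    fix x assume "x \<in> Kc n w"
    then obtain c where c: "\<forall>k. 0 \<le> c k" and xc: "x = comb n w {1..n} c"
      using cone_K[of n w] by (auto simp: coneI_def)
    have "phi n a x = (\<Sum>k\<in>{1..n}. c k * phi n a (rv n (pt w k)))" using xc phi_comb by simp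
    also have "\<dots> \<le> 0" using neg c by (intro sum_nonpos) (simp add: mult_nonneg_nonpos)
    finally show "(\<Sum>i<n. a i * x i) \<le> 0" by (simp add: phi_def)
  qed
  moreover have "Kc n w \<inter> H \<noteq> {}" using zero_in_K[of n w] Hd by (auto simp: phi_def Rn_def)
  ultimately have "supporting_hyperplane n (Kc n w) H"
    unfolding supporting_hyperplane_def H_def by blast
  moreover have "Kc n w \<inter> H = coneI n w I" using face_eq[OF neg] Hd Ieq by simp
  ultimately show ?thesis by blast
qed

lemma faces_eq: "faces n = {coneI n w I | w I. I \<subseteq> {1..n}}"
proof
  show "faces n \<subseteq> {coneI n w I | w I. I \<subseteq> {1..n}}"
  proof
    fix F assume "F \<in> faces n"
    then consider "F \<in> chambers n" | C H where "C \<in> chambers n" "supporting_hyperplane n C H" "F = C \<inter> H"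
      unfolding faces_def by blast
    then show "F \<in> {coneI n w I | w I. I \<subseteq> {1..n}}"
    proof cases
      case 1
      then obtain w where "F = Kc n w" using chambers_eq by blast
      then show ?thesis using cone_K[of n w] by blast
    next
      case (2 C H)
      then obtain w where "C = Kc n w" using chambers_eq by blast
      then show ?thesis using face_fwd[of n w H] 2 by blast
    qed
  qed
next
  show "{coneI n w I | w I. I \<subseteq> {1..n}} \<subseteq> faces n"
  proof
    fix F assume "F \<in> {coneI n w I | w I. I \<subseteq> {1..n}}"
    then obtain w I where F: "F = coneI n w I" "I \<subseteq> {1..n}" by blast
    show "F \<in> faces n"
    proof (cases "I = {1..n}")
      case True
      then have "F \<in> chambers n" using F cone_K chambers_eq by blast
      then show ?thesis by (simp add: faces_def)
    next
      case False
      then obtain H where "supporting_hyperplane n (Kc n w) H" "Kc n w \<inter> H = F"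
        using face_bwd[OF F(2) False, of w] F by blast
      moreover have "Kc n w \<in> chambers n" using chambers_eq by blast
      ultimately show ?thesis unfolding faces_def by blast
    qed
  qed
qed



definition cone :: "nat \<Rightarrow> (nat \<times> nat) set \<Rightarrow> (nat \<Rightarrow> real) set" where
  "cone n S = {(\<lambda>i. \<Sum>p\<in>S. c p * rv n p i) | c. \<forall>p. 0 \<le> c p}"

definition Ch :: "nat \<Rightarrow> (nat \<times> nat) set set" where
  "Ch n = {pt w ` I | w I. I \<subseteq> {1..n}}"

lemma pt_inj: "inj (pt w)"
proof (rule injI)
  fix a b assume "pt w a = pt w b"
  then show "a = b" using pt_le[of w a] pt_le[of w b] by metis
qed

lemma coneI_cone: assumes I: "I \<subseteq> {1..n}" shows "coneI n w I = cone n (pt w ` I)"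
proof
  have inj: "inj_on (pt w) I" using pt_inj by (rule inj_on_subset) simp
  show "coneI n w I \<subseteq> cone n (pt w ` I)"
  proof
    fix z assume "z \<in> coneI n w I"
    then obtain c where c: "\<forall>k. 0 \<le> c k" "z = comb n w I c" by (auto simp: coneI_def)
    define c' where "c' p = c (fst p + snd p)" for p :: "nat \<times> nat"
    have "z = (\<lambda>i. \<Sum>p\<in>pt w ` I. c' p * rv n p i)"
      unfolding c(2) comb_def by (simp add: sum.reindex[OF inj] c'_def pt_le)
    moreover have "\<forall>p. 0 \<le> c' p" using c by (simp add: c'_def)
    ultimately show "z \<in> cone n (pt w ` I)" by (auto simp: cone_def)
  qed
next
  have inj: "inj_on (pt w) I" using pt_inj by (rule inj_on_subset) simp
  show "cone n (pt w ` I) \<subseteq> coneI n w I"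
  proof
    fix z assume "z \<in> cone n (pt w ` I)"
    then obtain c where c: "\<forall>p. 0 \<le> c p" "z = (\<lambda>i. \<Sum>p\<in>pt w ` I. c p * rv n p i)" by (auto simp: cone_def)
    have "z = comb n w I (\<lambda>k. c (pt w k))"
      unfolding c(2) comb_def by (simp add: sum.reindex[OF inj])
    moreover have "\<forall>k. 0 \<le> c (pt w k)" using c(1) by blast
    ultimately show "z \<in> coneI n w I" by (auto simp: coneI_def)
  qed
qed

lemma faces_cone: "faces n = cone n ` Ch n"
proof -
  have "faces n = {coneI n w I | w I. I \<subseteq> {1..n}}" by (rule faces_eq)
  also have "\<dots> = {cone n (pt w ` I) | w I. I \<subseteq> {1..n}}" using coneI_cone by metis
  also have "\<dots> = cone n ` Ch n" by (auto simp: Ch_def)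
  finally show ?thesis .
qed

lemma Ch_lev: "S \<in> Ch n \<Longrightarrow> p \<in> S \<Longrightarrow> 1 \<le> fst p + snd p \<and> fst p + snd p \<le> n"
  unfolding Ch_def using pt_le by fastforce

lemma Ch_sub: "S \<in> Ch n \<Longrightarrow> S \<subseteq> {0..n} \<times> {0..n}"
proof
  fix p assume "S \<in> Ch n" "p \<in> S"
  then have "fst p + snd p \<le> n" using Ch_lev by blast
  then show "p \<in> {0..n} \<times> {0..n}" by (cases p) auto
qed

lemma Ch_finite_elem: "S \<in> Ch n \<Longrightarrow> finite S"
  using Ch_sub finite_subset by blast

lemma Ch_finite: "finite (Ch n)"
proof -
  have "Ch n \<subseteq> Pow ({0..n} \<times> {0..n})" using Ch_sub by blast
  then show ?thesis by (rule finite_subset) simp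
qed

lemma Ch_card: "S \<in> Ch n \<Longrightarrow> card S \<le> n"
proof -
  assume "S \<in> Ch n"
  then obtain w I where "S = pt w ` I" "I \<subseteq> {1..n}" by (auto simp: Ch_def)
  then show ?thesis using card_image_le[of I "pt w"] card_mono[of "{1..n}" I]
    by (metis card_atLeastAtMost diff_Suc_1 finite_atLeastAtMost finite_subset le_trans)
qed

lemma rv_card1: "fst p + snd p \<le> n \<Longrightarrow> card {i. i < n \<and> rv n p i = 1} = fst p"
proof -
  assume a: "fst p + snd p \<le> n"
  have "{i. i < n \<and> rv n p i = 1} = {..<fst p}" using a by (auto simp: rv_def)
  then show ?thesis by simp
qed

lemma rv_card2: "fst p + snd p \<le> n \<Longrightarrow> card {i. i < n \<and> rv n p i = -1} = snd p"
proof -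
  assume a: "fst p + snd p \<le> n"
  have "{i. i < n \<and> rv n p i = -1} = {n - snd p..<n}" using a by (auto simp: rv_def)
  then show ?thesis using a by simp
qed

lemma rv_inj: "fst p + snd p \<le> n \<Longrightarrow> fst q + snd q \<le> n \<Longrightarrow> rv n p = rv n q \<Longrightarrow> p = q"
  using rv_card1[of p n] rv_card1[of q n] rv_card2[of p n] rv_card2[of q n] by (metis prod.expand)

lemma rv_nz: assumes "1 \<le> fst p + snd p" "fst p + snd p \<le> n" shows "rv n p \<noteq> (\<lambda>i. 0)"
proof
  assume e: "rv n p = (\<lambda>i. 0)"
  show False
  proof (cases "fst p = 0")
    case True
    then have "rv n p (n - 1) = -1" using assms by (auto simp: rv_def)
    then show False using e by simp
  next
    case False
    then have "rv n p 0 = 1" by (simp add: rv_def)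
    then show False using e by simp
  qed
qed

lemma rv_in_cone: "finite S \<Longrightarrow> p \<in> S \<Longrightarrow> rv n p \<in> cone n S"
proof -
  assume a: "finite S" "p \<in> S"
  have "rv n p = (\<lambda>i. \<Sum>q\<in>S. (if q = p then 1 else 0) * rv n q i)"
  proof
    fix i
    have "(\<Sum>q\<in>S. (if q = p then 1 else 0) * rv n q i) = (\<Sum>q\<in>S. if q = p then rv n p i else 0)"
      by (rule sum.cong) auto
    also have "\<dots> = rv n p i" using a by (simp add: sum.delta')
    finally show "rv n p i = (\<Sum>q\<in>S. (if q = p then 1 else 0) * rv n q i)" by simp
  qed
  then show ?thesis unfolding cone_def by (auto intro!: exI[of _ "\<lambda>q. if q = p then 1 else 0"])
qed

lemma sz_rv_vals: "sz n w (rv n q) j \<in> {-1, 0, 1}"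
  by (auto simp: sz_def ep_def rv_def)

lemma mem_cone: assumes S: "S \<in> Ch n" and q: "1 \<le> fst q + snd q" "fst q + snd q \<le> n"
  and r: "rv n q \<in> cone n S" shows "q \<in> S"
proof -
  obtain w I where SI: "S = pt w ` I" and I: "I \<subseteq> {1..n}" using S by (auto simp: Ch_def)
  have fI: "finite I" using I finite_subset by blast
  obtain c where c: "\<forall>k. 0 \<le> c k" and rc: "rv n q = comb n w I c"
    using r coneI_cone[OF I, of w] SI by (auto simp: coneI_def)
  define T where "T j = sz n w (rv n q) j" for j
  have T: "T j = (\<Sum>k\<in>{k\<in>I. j \<le> k}. c k)" if "1 \<le> j" for j
    using sz_comb[OF I that, of w c] rc by (simp add: T_def)
  have T01: "T j = 0 \<or> T j = 1" if "1 \<le> j" for j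
  proof -
    have "0 \<le> T j" unfolding T[OF that] using c by (simp add: sum_nonneg)
    moreover have "T j \<in> {-1, 0, 1}" unfolding T_def by (rule sz_rv_vals)
    ultimately show ?thesis by auto
  qed
  have cT: "c k = T k - T (Suc k)" if "k \<in> I" for k
  proof -
    have k1: "1 \<le> k" using that I by auto
    have "sz n w (comb n w I c) k - sz n w (comb n w I c) (Suc k) = (if k \<in> I then c k else 0)"
      by (rule sz_diff_comb[OF I k1])
    then show ?thesis using that by (simp add: T_def rc)
  qed
  have c01: "c k = 0 \<or> c k = 1" if "k \<in> I" for k
  proof -
    have k1: "1 \<le> k" using that I by auto
    have "0 \<le> c k" using c by blast
    then show ?thesis using cT[OF that] T01[OF k1] T01[of "Suc k"] by auto
  qed
  have sum1: "(\<Sum>k\<in>I. c k) \<le> 1"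
  proof -
    have "{k\<in>I. 1 \<le> k} = I" using I by auto
    then have "T 1 = (\<Sum>k\<in>I. c k)" using T[of 1] by simp
    then show ?thesis using T01[of 1] by auto
  qed
  define J where "J = {k\<in>I. c k \<noteq> 0}"
  have JI: "J \<subseteq> I" by (auto simp: J_def)
  have rJ: "rv n q = comb n w J c" using rc comb_restrict[OF JI fI, of c n w] by (auto simp: J_def)
  have "J \<noteq> {}"
  proof
    assume "J = {}"
    then have "rv n q = (\<lambda>i. 0)" using rJ by (simp add: comb_def)
    then show False using rv_nz[OF q] by simp
  qed
  then obtain m where m: "m \<in> J" by blast
  have cm: "c m = 1" using m c01 by (auto simp: J_def)
  have Jm: "J = {m}"
  proof (rule ccontr)
    assume "J \<noteq> {m}"
    then obtain m' where m': "m' \<in> J" "m' \<noteq> m" using m by blast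
    have "c m' = 1" using m' c01 by (auto simp: J_def)
    have "(\<Sum>k\<in>{m, m'}. c k) \<le> (\<Sum>k\<in>I. c k)"
      using m m' JI fI c by (intro sum_mono2) auto
    then show False using sum1 cm \<open>c m' = 1\<close> m' by simp
  qed
  have "rv n q = rv n (pt w m)"
    using rJ Jm cm by (simp add: comb_def)
  then have "q = pt w m" using rv_inj[of q n "pt w m"] q pt_le[of w m] m JI I by auto
  then show ?thesis using SI m JI by auto
qed

lemma cone_inj: "inj_on (cone n) (Ch n)"
proof (rule inj_onI)
  have sub: "S \<subseteq> S'" if "S \<in> Ch n" "S' \<in> Ch n" "cone n S = cone n S'" for S S'
  proof
    fix p assume p: "p \<in> S"
    have "rv n p \<in> cone n S" using rv_in_cone[OF Ch_finite_elem[OF that(1)] p] .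
    then show "p \<in> S'" using mem_cone[OF that(2)] Ch_lev[OF that(1) p] that(3) by auto
  qed
  fix S S' assume "S \<in> Ch n" "S' \<in> Ch n" "cone n S = cone n S'"
  then show "S = S'" using sub[of S S'] sub[of S' S] by auto
qed



lemma vs: "vector_space (\<lambda>(c::real) (x::nat \<Rightarrow> real) i. c * x i)"
  by unfold_locales (auto simp: fun_eq_iff algebra_simps)

interpretation VS: vector_space "\<lambda>(c::real) (x::nat \<Rightarrow> real) i. c * x i"
  by (rule vs)

lemma fsum_apply: "(\<Sum>p\<in>S. f p) i = (\<Sum>p\<in>S. (f p i :: real))"
  by (induct S rule: infinite_finite_induct) auto

lemma sz_zero: "sz n w (\<lambda>i. 0) k = 0"
  by (simp add: sz_def)

lemma indep: assumes I: "I \<subseteq> {1..n}" shows "VS.independent (rv n ` pt w ` I)"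
proof -
  define f where "f k = rv n (pt w k)" for k
  have img: "rv n ` pt w ` I = f ` I" unfolding f_def image_image by (rule refl)
  have injf: "inj_on f I"
  proof (rule inj_onI)
    fix a b assume ab: "a \<in> I" "b \<in> I" "f a = f b"
    have "a \<le> n" "b \<le> n" using ab(1,2) I by (meson atLeastAtMost_iff subsetD)+
    then have "pt w a = pt w b"
    proof (intro rv_inj)
      show "rv n (pt w a) = rv n (pt w b)" using ab(3) by (simp add: f_def)
    qed (simp_all add: pt_le)
    then show "a = b" using pt_inj by (simp add: inj_eq)
  qed
  show ?thesis unfolding VS.independent_explicit_module img
  proof (intro allI impI)
    fix t u v assume ft: "finite t" and ts: "t \<subseteq> f ` I"
      and s0: "(\<Sum>v\<in>t. (\<lambda>i. u v * v i)) = 0" and vt: "v \<in> t"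
    obtain J where J: "J \<subseteq> I" "t = f ` J" using ts by (auto simp: subset_image_iff)
    have injJ: "inj_on f J" using injf J(1) by (rule inj_on_subset)
    have JI: "J \<subseteq> {1..n}" using J I by auto
    have "(\<Sum>k\<in>J. (\<lambda>i. u (f k) * f k i)) = 0" using s0 J(2) sum.reindex[OF injJ, of "\<lambda>v. (\<lambda>i. u v * v i)"] by simp
    then have c0: "comb n w J (\<lambda>k. u (f k)) = (\<lambda>i. 0)"
      by (auto simp: comb_def fun_eq_iff fsum_apply f_def)
    obtain k where k: "k \<in> J" "v = f k" using vt J(2) by auto
    have k1: "1 \<le> k" using k JI by auto
    have "sz n w (comb n w J (\<lambda>k. u (f k))) k - sz n w (comb n w J (\<lambda>k. u (f k))) (Suc k) = u (f k)"
      using sz_diff_comb[OF JI k1, of w "\<lambda>k. u (f k)"] k by simp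
    then show "u v = 0" using c0 k by (simp add: sz_zero)
  qed
qed

lemma dim_cone: assumes S: "S \<in> Ch n" shows "lin_dim (cone n S) = card S"
proof -
  obtain w I where SI: "S = pt w ` I" and I: "I \<subseteq> {1..n}" using S by (auto simp: Ch_def)
  have fS: "finite S" using Ch_finite_elem[OF S] .
  have injrv: "inj_on (rv n) S"
  proof (rule inj_onI)
    fix p q assume "p \<in> S" "q \<in> S" "rv n p = rv n q"
    then show "p = q" using rv_inj[of p n q] Ch_lev[OF S] by auto
  qed
  have "VS.dim (cone n S) = card S"
  proof (rule VS.dim_unique)
    show "rv n ` S \<subseteq> cone n S" using rv_in_cone[OF fS] by auto
    show "cone n S \<subseteq> VS.span (rv n ` S)"
    proof
      fix z assume "z \<in> cone n S"
      then obtain c where z: "z = (\<lambda>i. \<Sum>p\<in>S. c p * rv n p i)" by (auto simp: cone_def)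
      have "z = (\<Sum>p\<in>S. (\<lambda>i. c p * rv n p i))" by (simp add: z fun_eq_iff fsum_apply)
      also have "\<dots> \<in> VS.span (rv n ` S)"
      proof (rule VS.span_sum)
        fix p assume "p \<in> S"
        then have "rv n p \<in> VS.span (rv n ` S)" by (intro VS.span_superset[THEN subsetD]) auto
        then show "(\<lambda>i. c p * rv n p i) \<in> VS.span (rv n ` S)" by (rule VS.span_scale)
      qed
      finally show "z \<in> VS.span (rv n ` S)" .
    qed
    show "VS.independent (rv n ` S)" using indep[OF I] SI by simp
    show "card (rv n ` S) = card S" using card_image[OF injrv] .
  qed
  then show ?thesis by (simp add: lin_dim_def)
qed

lemma g_eq: "g n k = card {S \<in> Ch n. card S = k}"
proof -
  have "{F \<in> faces n. lin_dim F = k} = cone n ` {S \<in> Ch n. card S = k}"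
    using dim_cone by (auto simp: faces_cone)
  moreover have "inj_on (cone n) {S \<in> Ch n. card S = k}"
    using cone_inj by (rule inj_on_subset) auto
  ultimately show ?thesis by (simp add: g_def card_image)
qed

lemma G_Ch: "G n t = (\<Sum>S\<in>Ch n. t ^ card S)"
proof -
  have "(\<Sum>S\<in>Ch n. t ^ card S) = (\<Sum>k\<in>{0..n}. \<Sum>S\<in>{S. S \<in> Ch n \<and> card S = k}. t ^ card S)"
    by (rule sum.group[symmetric]) (use Ch_finite Ch_card in auto)
  also have "\<dots> = (\<Sum>k\<in>{0..n}. real (card {S \<in> Ch n. card S = k}) * t ^ k)"
    by (rule sum.cong) auto
  finally show ?thesis by (simp add: G_def g_eq)
qed



definition sh :: "nat \<times> nat \<Rightarrow> nat \<times> nat \<Rightarrow> nat \<times> nat" where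
  "sh p q = (fst p + fst q, snd p + snd q)"

definition Phi :: "nat \<times> nat \<times> (nat \<times> nat) set \<Rightarrow> (nat \<times> nat) set" where
  "Phi x = (case x of (d, u, S') \<Rightarrow> insert (u, d - u) (sh (u, d - u) ` S'))"

lemma cT_shift: "cT w (d + j) = cT w d + cT (\<lambda>i. w (i + d)) j"
  by (induct j) (auto simp: cT_Suc add.commute)

lemma cF_shift: "cF w (d + j) = cF w d + cF (\<lambda>i. w (i + d)) j"
  by (induct j) (auto simp: cF_Suc add.commute)

lemma pt_shift: "pt w (d + j) = sh (pt w d) (pt (\<lambda>i. w (i + d)) j)"
  by (simp add: pt_def sh_def cT_shift cF_shift)

lemma sh_inj: "inj (sh p)"
  by (rule injI) (auto simp: sh_def prod_eq_iff)

lemma lev_sh: "fst (sh p q) + snd (sh p q) = (fst p + snd p) + (fst q + snd q)"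
  by (simp add: sh_def)

lemma empty_Ch: "{} \<in> Ch n"
  unfolding Ch_def by blast

lemma Phi_in: assumes d: "d \<in> {1..n}" and u: "u \<le> d" and S': "S' \<in> Ch (n - d)"
  shows "Phi (d, u, S') \<in> Ch n"
proof -
  obtain w' I' where S'I: "S' = pt w' ` I'" and I': "I' \<subseteq> {1..n - d}" using S' by (auto simp: Ch_def)
  define w where "w j = (if j < u then True else if j < d then False else w' (j - d))" for j
  have "{j. j < d \<and> w j} = {..<u}" using u by (auto simp: w_def)
  then have cTd: "cT w d = u" by (simp add: cT_def)
  then have ptd: "pt w d = (u, d - u)" using cTF[of w d] by (simp add: pt_def)
  have w': "(\<lambda>i. w (i + d)) = w'" using u by (auto simp: w_def fun_eq_iff)
  have "Phi (d, u, S') = pt w ` (insert d ((+) d ` I'))"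
    using pt_shift[of w d] by (simp add: Phi_def S'I ptd w' image_image)
  moreover have "insert d ((+) d ` I') \<subseteq> {1..n}"
  proof
    fix k assume "k \<in> insert d ((+) d ` I')"
    then consider "k = d" | j where "j \<in> I'" "k = d + j" by blast
    then show "k \<in> {1..n}"
    proof cases
      case 1 then show ?thesis using d by simp
    next
      case 2
      then have "j \<in> {1..n - d}" using I' by blast
      then show ?thesis using 2 d by auto
    qed
  qed
  ultimately show ?thesis unfolding Ch_def by blast
qed

lemma Phi_surj: assumes S: "S \<in> Ch n" and ne: "S \<noteq> {}"
  shows "\<exists>d u S'. d \<in> {1..n} \<and> u \<le> d \<and> S' \<in> Ch (n - d) \<and> S = Phi (d, u, S')"
proof -
  obtain w I where SI: "S = pt w ` I" and I: "I \<subseteq> {1..n}" using S by (auto simp: Ch_def)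
  have fI: "finite I" using I finite_subset by blast
  have Ine: "I \<noteq> {}" using ne SI by auto
  define d where "d = Min I"
  have dI: "d \<in> I" using Min_in[OF fI Ine] by (simp add: d_def)
  have dmin: "d \<le> k" if "k \<in> I" for k using Min_le[OF fI that] by (simp add: d_def)
  define u where "u = cT w d"
  have ud: "u \<le> d" using cTF[of w d] by (simp add: u_def)
  have ptd: "pt w d = (u, d - u)" using cTF[of w d] by (simp add: pt_def u_def)
  define w' where "w' = (\<lambda>i. w (i + d))"
  define I' where "I' = (\<lambda>k. k - d) ` (I - {d})"
  have I'sub: "I' \<subseteq> {1..n - d}"
  proof
    fix j assume "j \<in> I'"
    then obtain k where k: "k \<in> I" "k \<noteq> d" "j = k - d" by (auto simp: I'_def)
    then have "d < k" using dmin[OF k(1)] by simp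
    then show "j \<in> {1..n - d}" using k I by auto
  qed
  have "S = Phi (d, u, pt w' ` I')"
  proof -
    have "pt w ` I = insert (pt w d) (pt w ` (I - {d}))" using dI by auto
    also have "pt w ` (I - {d}) = sh (pt w d) ` pt w' ` I'"
    proof -
      have "pt w ` (I - {d}) = (\<lambda>k. pt w (d + (k - d))) ` (I - {d})"
      proof (rule image_cong[OF refl])
        fix k assume "k \<in> I - {d}"
        then have "d \<le> k" using dmin by auto
        then show "pt w k = pt w (d + (k - d))" by simp
      qed
      also have "\<dots> = sh (pt w d) ` pt w' ` I'"
        by (simp add: pt_shift w'_def I'_def image_image)
      finally show ?thesis .
    qed
    finally show ?thesis using SI ptd by (simp add: Phi_def)
  qed
  moreover have "pt w' ` I' \<in> Ch (n - d)" using I'sub unfolding Ch_def by blast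
  moreover have "d \<in> {1..n}" using dI I by auto
  ultimately show ?thesis using ud by blast
qed

lemma Phi_inj: "inj_on Phi {x. fst x \<in> {1..n} \<and> fst (snd x) \<le> fst x \<and> snd (snd x) \<in> Ch (n - fst x)}"
proof (rule inj_onI)
  fix x y
  assume x: "x \<in> {x. fst x \<in> {1..n} \<and> fst (snd x) \<le> fst x \<and> snd (snd x) \<in> Ch (n - fst x)}"
    and y: "y \<in> {x. fst x \<in> {1..n} \<and> fst (snd x) \<le> fst x \<and> snd (snd x) \<in> Ch (n - fst x)}"
    and e: "Phi x = Phi y"
  obtain d u S where xd: "x = (d, u, S)" by (cases x) auto
  obtain d2 u2 S2 where yd: "y = (d2, u2, S2)" by (cases y) auto
  have ud: "u \<le> d" "u2 \<le> d2" and SC: "S \<in> Ch (n - d)" "S2 \<in> Ch (n - d2)" using x y xd yd by auto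
  define p where "p = (u, d - u)"
  define p2 where "p2 = (u2, d2 - u2)"
  have lp: "fst p + snd p = d" "fst p2 + snd p2 = d2" using ud by (auto simp: p_def p2_def)
  have levS: "fst p + snd p < fst q + snd q" if qq: "q \<in> sh p ` S" for q
  proof -
    obtain q' where q': "q' \<in> S" "q = sh p q'" using qq by blast
    have "1 \<le> fst q' + snd q'" using Ch_lev[OF SC(1) q'(1)] by simp
    then show ?thesis unfolding q'(2) using lev_sh[of p q'] by linarith
  qed
  have levS2: "fst p2 + snd p2 < fst q + snd q" if qq: "q \<in> sh p2 ` S2" for q
  proof -
    obtain q' where q': "q' \<in> S2" "q = sh p2 q'" using qq by blast
    have "1 \<le> fst q' + snd q'" using Ch_lev[OF SC(2) q'(1)] by simp
    then show ?thesis unfolding q'(2) using lev_sh[of p2 q'] by linarith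
  qed
  have E: "insert p (sh p ` S) = insert p2 (sh p2 ` S2)"
    using e xd yd by (simp add: Phi_def p_def p2_def)
  have pp: "p = p2"
  proof (rule ccontr)
    assume ne: "p \<noteq> p2"
    have "p \<in> insert p2 (sh p2 ` S2)" unfolding E[symmetric] by simp
    then have "p \<in> sh p2 ` S2" using ne by simp
    then have a: "d2 < d" using levS2[of p] lp by simp
    have "p2 \<in> insert p (sh p ` S)" unfolding E by simp
    then have "p2 \<in> sh p ` S" using ne by simp
    then have "d < d2" using levS[of p2] lp by simp
    then show False using a by simp
  qed
  have n1: "p \<notin> sh p ` S" using levS[of p] by auto
  have n2: "p \<notin> sh p ` S2" using levS2[of p] pp by auto
  have E2: "insert p (sh p ` S) = insert p (sh p ` S2)" using E pp by simp
  have "sh p ` S = sh p ` S2" using insert_ident[OF n1 n2] E2 by blast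
  then have "S = S2" by (rule inj_image_eq_iff[OF sh_inj, THEN iffD1])
  moreover have "u = u2" using pp unfolding p_def p2_def by simp
  moreover have "d = d2" using lp pp by simp
  ultimately show "x = y" using xd yd by simp
qed

lemma Phi_card: assumes "S \<in> Ch m" shows "card (Phi (d, u, S)) = Suc (card S)"
proof -
  have fS: "finite S" using Ch_finite_elem[OF assms] .
  have "(u, d - u) \<notin> sh (u, d - u) ` S"
  proof
    assume "(u, d - u) \<in> sh (u, d - u) ` S"
    then obtain q where q: "q \<in> S" "(u, d - u) = sh (u, d - u) q" by blast
    then have "fst q + snd q = 0" by (simp add: sh_def prod_eq_iff)
    then show False using Ch_lev[OF assms q(1)] by simp
  qed
  moreover have "card (sh (u, d - u) ` S) = card S"
    by (rule card_image[OF inj_on_subset[OF sh_inj subset_UNIV]])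
  ultimately show ?thesis using fS by (simp add: Phi_def)
qed



definition Gc :: "real \<Rightarrow> nat \<Rightarrow> real" where
  "Gc t n = (\<Sum>S\<in>Ch n. t ^ card S)"

lemma Ch_Phi: "Ch n - {{}} = Phi ` (SIGMA d:{1..n}. {0..d} \<times> Ch (n - d))"
proof
  show "Ch n - {{}} \<subseteq> Phi ` (SIGMA d:{1..n}. {0..d} \<times> Ch (n - d))"
  proof
    fix S assume "S \<in> Ch n - {{}}"
    then obtain d u S' where "d \<in> {1..n}" "u \<le> d" "S' \<in> Ch (n - d)" "S = Phi (d, u, S')"
      using Phi_surj[of S n] by blast
    then show "S \<in> Phi ` (SIGMA d:{1..n}. {0..d} \<times> Ch (n - d))"
      by (intro image_eqI[where x="(d, u, S')"]) auto
  qed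
next
  show "Phi ` (SIGMA d:{1..n}. {0..d} \<times> Ch (n - d)) \<subseteq> Ch n - {{}}"
  proof
    fix S assume "S \<in> Phi ` (SIGMA d:{1..n}. {0..d} \<times> Ch (n - d))"
    then obtain x where x0: "x \<in> (SIGMA d:{1..n}. {0..d} \<times> Ch (n - d))" "S = Phi x" by blast
    obtain d u S' where xx: "x = (d, u, S')" by (cases x) auto
    have x: "d \<in> {1..n}" "u \<le> d" "S' \<in> Ch (n - d)" "S = Phi (d, u, S')" using x0 xx by auto
    then have "S \<in> Ch n" using Phi_in by blast
    moreover have "S \<noteq> {}" using x(4) by (simp add: Phi_def)
    ultimately show "S \<in> Ch n - {{}}" by simp
  qed
qed

lemma Gc_rec: "Gc t n = 1 + t * (\<Sum>d\<in>{1..n}. real (Suc d) * Gc t (n - d))"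
proof -
  define D where "D = (SIGMA d:{1..n}. {0..d} \<times> Ch (n - d))"
  have fD: "finite D" unfolding D_def using Ch_finite by (intro finite_SigmaI) auto
  have injD: "inj_on Phi D"
  proof (rule inj_on_subset[OF Phi_inj[of n]])
    show "D \<subseteq> {x. fst x \<in> {1..n} \<and> fst (snd x) \<le> fst x \<and> snd (snd x) \<in> Ch (n - fst x)}"
      by (auto simp: D_def)
  qed
  have Ceq: "Ch n = insert {} (Ch n - {{}})" using empty_Ch by blast
  have fC: "finite (Ch n - {{}})" using Ch_finite by simp
  have "Gc t n = (\<Sum>S\<in>insert {} (Ch n - {{}}). t ^ card S)" unfolding Gc_def using Ceq by simp
  also have "\<dots> = t ^ card ({}::(nat \<times> nat) set) + (\<Sum>S\<in>Ch n - {{}}. t ^ card S)"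
    by (rule sum.insert[OF fC]) simp
  finally have "Gc t n = 1 + (\<Sum>S\<in>Ch n - {{}}. t ^ card S)" by simp
  also have "(\<Sum>S\<in>Ch n - {{}}. t ^ card S) = (\<Sum>x\<in>D. t ^ card (Phi x))"
    unfolding Ch_Phi D_def[symmetric] using sum.reindex[OF injD] by simp
  also have "\<dots> = (\<Sum>d\<in>{1..n}. \<Sum>y\<in>{0..d} \<times> Ch (n - d). t ^ card (Phi (d, y)))"
  proof -
    have "(\<Sum>d\<in>{1..n}. \<Sum>y\<in>{0..d} \<times> Ch (n - d). t ^ card (Phi (d, y)))
        = (\<Sum>(d, y)\<in>D. t ^ card (Phi (d, y)))"
      unfolding D_def by (rule sum.Sigma) (auto intro: Ch_finite)
    also have "\<dots> = (\<Sum>x\<in>D. t ^ card (Phi x))" by (simp add: case_prod_beta')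
    finally show ?thesis by simp
  qed
  also have "\<dots> = (\<Sum>d\<in>{1..n}. \<Sum>u\<in>{0..d}. \<Sum>S'\<in>Ch (n - d). t ^ card (Phi (d, u, S')))"
  proof (rule sum.cong[OF refl])
    fix d
    have "(\<Sum>u\<in>{0..d}. \<Sum>S'\<in>Ch (n - d). t ^ card (Phi (d, u, S')))
        = (\<Sum>(u, S')\<in>{0..d} \<times> Ch (n - d). t ^ card (Phi (d, u, S')))"
      by (rule sum.Sigma) (auto intro: Ch_finite)
    also have "\<dots> = (\<Sum>y\<in>{0..d} \<times> Ch (n - d). t ^ card (Phi (d, y)))" by (simp add: case_prod_beta')
    finally show "(\<Sum>y\<in>{0..d} \<times> Ch (n - d). t ^ card (Phi (d, y))) = (\<Sum>u\<in>{0..d}. \<Sum>S'\<in>Ch (n - d). t ^ card (Phi (d, u, S')))"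
      by simp
  qed
  also have "\<dots> = (\<Sum>d\<in>{1..n}. \<Sum>u\<in>{0..d}. t * Gc t (n - d))"
  proof (intro sum.cong refl)
    fix d u
    have "(\<Sum>S'\<in>Ch (n - d). t ^ card (Phi (d, u, S'))) = (\<Sum>S'\<in>Ch (n - d). t * t ^ card S')"
      by (rule sum.cong[OF refl]) (simp add: Phi_card)
    then show "(\<Sum>S'\<in>Ch (n - d). t ^ card (Phi (d, u, S'))) = t * Gc t (n - d)"
      by (simp add: Gc_def sum_distrib_left)
  qed
  also have "\<dots> = t * (\<Sum>d\<in>{1..n}. real (Suc d) * Gc t (n - d))"
    by (simp add: sum_distrib_left algebra_simps)
  finally show ?thesis .
qed

definition Ap :: "real \<Rightarrow> nat \<Rightarrow> real" where
  "Ap t n = (\<Sum>j<n. real (n - j + 1) * Gc t j)"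

definition Bp :: "real \<Rightarrow> nat \<Rightarrow> real" where
  "Bp t n = (\<Sum>j<n. Gc t j)"

lemma Gc_Ap: "Gc t n = 1 + t * Ap t n"
proof -
  have "(\<Sum>d\<in>{1..n}. real (Suc d) * Gc t (n - d)) = (\<Sum>j<n. real (n - j + 1) * Gc t j)"
    by (rule sum.reindex_bij_witness[of _ "\<lambda>j. n - j" "\<lambda>d. n - d"]) auto
  then show ?thesis using Gc_rec[of t n] by (simp add: Ap_def)
qed

lemma Ap_Suc: "Ap t (Suc n) = Ap t n + Bp t n + 2 * Gc t n"
proof -
  have "Ap t (Suc n) = (\<Sum>j<n. real (Suc n - j + 1) * Gc t j) + 2 * Gc t n"
    by (simp add: Ap_def)
  also have "(\<Sum>j<n. real (Suc n - j + 1) * Gc t j) = (\<Sum>j<n. real (n - j + 1) * Gc t j + Gc t j)"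
    by (rule sum.cong) (auto simp: Suc_diff_le algebra_simps of_nat_diff)
  also have "\<dots> = Ap t n + Bp t n" by (simp add: Ap_def Bp_def sum.distrib)
  finally show ?thesis .
qed

lemma Bp_Suc: "Bp t (Suc n) = Bp t n + Gc t n"
  by (simp add: Bp_def)

lemma Gc_0: "Gc t 0 = 1" using Gc_Ap[of t 0] by (simp add: Ap_def)

lemma Gc_1: "Gc t 1 = 1 + 2 * t" using Gc_Ap[of t 1] Gc_0 by (simp add: Ap_def)

lemma Gc_rec2: "Gc t (Suc (Suc n)) = (2 + 2 * t) * Gc t (Suc n) - (1 + t) * Gc t n"
proof -
  have a: "Gc t (Suc n) - Gc t n = t * (Bp t n + 2 * Gc t n)"
    using Gc_Ap[of t n] Gc_Ap[of t "Suc n"] Ap_Suc[of t n] by (simp add: algebra_simps)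
  have b: "Gc t (Suc (Suc n)) - Gc t (Suc n) = t * (Bp t n + Gc t n + 2 * Gc t (Suc n))"
    using Gc_Ap[of t "Suc n"] Gc_Ap[of t "Suc (Suc n)"] Ap_Suc[of t "Suc n"] Bp_Suc[of t n]
    by (simp add: algebra_simps)
  from a b show ?thesis by (simp add: algebra_simps)
qed



lemma closed_form: assumes t: "t > 0"
  shows "Gc t n = ((t + sqrt (t * (1 + t))) * (1 + t + sqrt (t * (1 + t))) ^ n
                  - (t - sqrt (t * (1 + t))) * (1 + t - sqrt (t * (1 + t))) ^ n) / (2 * sqrt (t * (1 + t)))"
proof -
  define r where "r = sqrt (t * (1 + t))"
  have rpos: "r > 0" using t by (simp add: r_def)
  have r2: "r * r = t + t * t" using t by (simp add: r_def algebra_simps)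
  define L where "L = 1 + t + r"
  define M where "M = 1 + t - r"
  have L2: "L * L = (2 + 2 * t) * L - (1 + t)" using r2 by (simp add: L_def algebra_simps)
  have M2: "M * M = (2 + 2 * t) * M - (1 + t)" using r2 by (simp add: M_def algebra_simps)
  define f where "f k = ((t + r) * L ^ k - (t - r) * M ^ k) / (2 * r)" for k
  have "Gc t n = f n"
  proof (induct n rule: less_induct)
    case (less n)
    show ?case
    proof (cases n)
      case 0
      then show ?thesis using rpos by (simp add: Gc_0 f_def)
    next
      case (Suc m)
      show ?thesis
      proof (cases m)
        case 0
        have g1: "Gc t (Suc 0) = 1 + 2 * t" using Gc_1[of t] by simp
        then show ?thesis using Suc 0 rpos by (simp add: f_def L_def M_def field_simps)
      next
        case (Suc k)
        have e: "n = Suc (Suc k)" using Suc \<open>n = Suc m\<close> by simp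
        have ih: "Gc t (Suc k) = f (Suc k)" "Gc t k = f k" using less e by auto
        have "f (Suc (Suc k)) = (2 + 2 * t) * f (Suc k) - (1 + t) * f k"
        proof -
          have "L ^ Suc (Suc k) = L ^ k * (L * L)" by (simp add: mult.commute mult.left_commute)
          then have a: "L ^ Suc (Suc k) = L ^ k * ((2 + 2 * t) * L - (1 + t))"
            using L2 by simp
          have "M ^ Suc (Suc k) = M ^ k * (M * M)" by (simp add: mult.commute mult.left_commute)
          then have b: "M ^ Suc (Suc k) = M ^ k * ((2 + 2 * t) * M - (1 + t))"
            using M2 by simp
          show ?thesis unfolding f_def a b using rpos by (simp add: field_simps)
        qed
        then show ?thesis using e ih Gc_rec2[of t k] by simp
      qed
    qed
  qed
  then show ?thesis by (simp add: f_def r_def L_def M_def)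
qed

theorem corollary1p6:
  fixes n :: nat and t :: real
  assumes "t > 0"
  shows "G n t =
    (let r = sqrt (t * (1 + t)) in
      ((t + r) * (1 + t + r) ^ n - (t - r) * (1 + t - r) ^ n) / (2 * r))"
  using closed_form[OF assms, of n] by (simp add: G_Ch Gc_def Let_def)


end
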